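(* Let $\mathcal{F}$ be a class of simple graphs closed under subdivisions. Then $\mathcal{F}\subseteq\mathrm{cl}(\mathcal{F}_K)$ for every non-bipartite graph $K$. In particular, $\equiv_{\mathcal{F}}$ admits $K$-cancellation for every non-bipartite graph $K$.
   Context: All graphs are finite, undirected, without multiple edges; simple means without loops. $\hom(F,G)$ counts homomorphisms; $G\equiv_{\mathcal{F}}H$ means $\hom(F,G)=\hom(F,H)$ for all $F\in\mathcal{F}$; $\mathrm{cl}(\mathcal{F})$ is the class of simple graphs $L$ such that for all simple $G,H$, $G\equiv_{\mathcal{F}}H$ implies $\hom(L,G)=\hom(L,H)$. $\mathcal{F}_K=\{F\in\mathcal{F}\mid\hom(F,K)>0\}$. A class is closed under subdivisions if replacing any edge of a member by a path yields a member. $G\times K$ is the categorical product (vertex set $V(G)\times V(K)$, $(g,k)\sim(g',k')$ iff $gg'\in E(G)$ and $kk'\in E(K)$). An equivalence relation $\approx$ on graphs admits $K$-cancellation if $G\times K\approx H\times K$ implies $G\approx H$ for all graphs $G,H$. *)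

theory Defs
  imports Main "HOL-Library.FuncSet"
begin

text \<open>Finite undirected graphs without multiple edges. An edge is a set of one
 (a loop) or two (an ordinary edge) vertices.\<close>

record 'a graph =
  verts :: "'a set"
  edges :: "'a set set"

definition wf_graph :: "'a graph \<Rightarrow> bool" where
  "wf_graph G \<longleftrightarrow> finite (verts G) \<and>
     (\<forall>e\<in>edges G. e \<subseteq> verts G \<and> (card e = 1 \<or> card e = 2))"

definition simple_graph :: "'a graph \<Rightarrow> bool" where
  "simple_graph G \<longleftrightarrow> wf_graph G \<and> (\<forall>e\<in>edges G. card e = 2)"

definition homs :: "'a graph \<Rightarrow> 'b graph \<Rightarrow> ('a \<Rightarrow> 'b) set" where
  "homs F G = {f \<in> verts F \<rightarrow>\<^sub>E verts G. \<forall>e\<in>edges F. f ` e \<in> edges G}"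

definition hom :: "'a graph \<Rightarrow> 'b graph \<Rightarrow> nat" where
  "hom F G = card (homs F G)"

definition hom_equiv :: "'v graph set \<Rightarrow> 'a graph \<Rightarrow> 'a graph \<Rightarrow> bool" where
  "hom_equiv \<F> G H \<longleftrightarrow> (\<forall>F\<in>\<F>. hom F G = hom F H)"

text \<open>cl(\<F>): the quantification over simple graphs G, H ranges over simple graphs
 with vertices in nat (every finite graph is isomorphic to one of these).\<close>
definition cl :: "nat graph set \<Rightarrow> nat graph set" where
  "cl \<F> = {L. simple_graph L \<and>
     (\<forall>G H :: nat graph. simple_graph G \<longrightarrow> simple_graph H \<longrightarrow>
        hom_equiv \<F> G H \<longrightarrow> hom L G = hom L H)}"

definition restrict_class :: "'v graph set \<Rightarrow> 'k graph \<Rightarrow> 'v graph set" where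
  "restrict_class \<F> K = {F \<in> \<F>. hom F K > 0}"

definition path_edges :: "'a list \<Rightarrow> 'a set set" where
  "path_edges p = {{p ! i, p ! Suc i} | i. Suc i < length p}"

definition subdivide_edge :: "'a graph \<Rightarrow> 'a \<Rightarrow> 'a \<Rightarrow> 'a list \<Rightarrow> 'a graph" where
  "subdivide_edge F u v ws =
     \<lparr>verts = verts F \<union> set ws,
      edges = (edges F - {{u, v}}) \<union> path_edges (u # ws @ [v])\<rparr>"

definition closed_under_subdivisions :: "'a graph set \<Rightarrow> bool" where
  "closed_under_subdivisions \<F> \<longleftrightarrow>
     (\<forall>F\<in>\<F>. \<forall>u v ws. {u, v} \<in> edges F \<and> u \<noteq> v \<and> ws \<noteq> [] \<and> distinct ws \<and>
        set ws \<inter> verts F = {} \<longrightarrow> subdivide_edge F u v ws \<in> \<F>)"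

definition bipartite :: "'a graph \<Rightarrow> bool" where
  "bipartite G \<longleftrightarrow> (\<exists>c :: 'a \<Rightarrow> bool. \<forall>e\<in>edges G. \<exists>x y. e = {x, y} \<and> c x \<noteq> c y)"

definition graph_prod :: "'a graph \<Rightarrow> 'b graph \<Rightarrow> ('a \<times> 'b) graph" where
  "graph_prod G K =
     \<lparr>verts = verts G \<times> verts K,
      edges = {{(g, k), (g', k')} | g g' k k'. {g, g'} \<in> edges G \<and> {k, k'} \<in> edges K}\<rparr>"

definition admits_cancellation ::
  "('a graph \<Rightarrow> 'a graph \<Rightarrow> bool) \<Rightarrow> (('a \<times> 'k) graph \<Rightarrow> ('a \<times> 'k) graph \<Rightarrow> bool)
     \<Rightarrow> 'k graph \<Rightarrow> bool" where
  "admits_cancellation R Rprod K \<longleftrightarrow>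
     (\<forall>G H. wf_graph G \<longrightarrow> wf_graph H \<longrightarrow> Rprod (graph_prod G K) (graph_prod H K) \<longrightarrow> R G H)"

end

theory Submission
  imports Defs Complex_Main "HOL-Library.Function_Algebras"
begin

definition mmul :: "'v set \<Rightarrow> ('v \<Rightarrow> 'v \<Rightarrow> 'r::comm_semiring_1) \<Rightarrow> ('v \<Rightarrow> 'v \<Rightarrow> 'r) \<Rightarrow> 'v \<Rightarrow> 'v \<Rightarrow> 'r" where
  "mmul V X Y = (\<lambda>x y. \<Sum>z\<in>V. X x z * Y z y)"

fun mpow :: "'v set \<Rightarrow> ('v \<Rightarrow> 'v \<Rightarrow> 'r::comm_semiring_1) \<Rightarrow> nat \<Rightarrow> 'v \<Rightarrow> 'v \<Rightarrow> 'r" where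
  "mpow V A 0 = (\<lambda>x y. if x = y \<and> x \<in> V then 1 else 0)"
| "mpow V A (Suc n) = mmul V (mpow V A n) A"

definition supp :: "'v set \<Rightarrow> ('v \<Rightarrow> 'v \<Rightarrow> 'r::zero) \<Rightarrow> bool" where
  "supp V X \<longleftrightarrow> (\<forall>x y. x \<notin> V \<or> y \<notin> V \<longrightarrow> X x y = 0)"

lemma mmul_assoc: "finite V \<Longrightarrow> mmul V (mmul V X Y) Z = mmul V X (mmul V Y Z)"
  unfolding mmul_def
  by (auto simp: fun_eq_iff sum_distrib_left sum_distrib_right mult.assoc intro: sum.swap)

lemma supp_mmul: "supp V X \<Longrightarrow> supp V Y \<Longrightarrow> supp V (mmul V X Y)"
  unfolding supp_def mmul_def by auto

lemma supp_mpow: "supp V A \<Longrightarrow> supp V (mpow V A n)"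
  by (induction n) (auto simp: supp_mmul, auto simp: supp_def)

lemma mmul_id_right: "finite V \<Longrightarrow> supp V X \<Longrightarrow> mmul V X (mpow V A 0) = X"
proof -
  assume f: "finite V" and s: "supp V X"
  show ?thesis
  proof (rule ext, rule ext)
    fix x y
    show "mmul V X (mpow V A 0) x y = X x y"
    proof (cases "y \<in> V")
      case True
      have "mmul V X (mpow V A 0) x y = (\<Sum>z\<in>V. if z = y then X x z else 0)"
        unfolding mmul_def by (intro sum.cong) auto
      also have "\<dots> = X x y" using True f by simp
      finally show ?thesis .
    next
      case False
      have "X x y = 0" using s False unfolding supp_def by auto
      moreover have "mmul V X (mpow V A 0) x y = 0"
        unfolding mmul_def using False by (intro sum.neutral) auto
      ultimately show ?thesis by simp
    qed
  qed
qed

lemma mmul_id_left: "finite V \<Longrightarrow> supp V X \<Longrightarrow> mmul V (mpow V A 0) X = X"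
proof -
  assume f: "finite V" and s: "supp V X"
  show ?thesis
  proof (rule ext, rule ext)
    fix x y
    show "mmul V (mpow V A 0) X x y = X x y"
    proof (cases "x \<in> V")
      case True
      have "mmul V (mpow V A 0) X x y = (\<Sum>z\<in>V. if z = x then X z y else 0)"
        unfolding mmul_def by (intro sum.cong) auto
      also have "\<dots> = X x y" using True f by simp
      finally show ?thesis .
    next
      case False
      have "X x y = 0" using s False unfolding supp_def by auto
      moreover have "mmul V (mpow V A 0) X x y = 0"
        unfolding mmul_def using False by (intro sum.neutral) auto
      ultimately show ?thesis by simp
    qed
  qed
qed

lemma mpow_add: "finite V \<Longrightarrow> supp V A \<Longrightarrow> mpow V A (m + n) = mmul V (mpow V A m) (mpow V A n)"
proof (induction n)
  case 0
  have "mmul V (mpow V A m) (mpow V A 0) = mpow V A m"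
    by (rule mmul_id_right[OF 0(1) supp_mpow[OF 0(2)]])
  thus ?case by (simp only: add_0_right)
next
  case (Suc n)
  then show ?case by (simp add: mmul_assoc)
qed

lemma mpow_1: assumes "finite V" "supp V A" shows "mpow V A 1 = A"
proof -
  have "mpow V A 1 = mmul V (mpow V A 0) A" by (simp only: One_nat_def mpow.simps(2))
  also have "\<dots> = A" by (rule mmul_id_left[OF assms])
  finally show ?thesis .
qed

lemma mpow_Suc_left: assumes "finite V" "supp V A" shows "mpow V A (Suc n) = mmul V A (mpow V A n)"
proof -
  have "mpow V A (Suc n) = mpow V A (1 + n)" by simp
  also have "\<dots> = mmul V (mpow V A 1) (mpow V A n)" by (rule mpow_add[OF assms])
  also have "\<dots> = mmul V A (mpow V A n)" by (simp only: mpow_1[OF assms])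
  finally show ?thesis .
qed

lemma of_nat_mpow: "of_nat (mpow V A n x y) = mpow V (\<lambda>x y. of_nat (A x y)) n x y"
  by (induction n arbitrary: x y) (auto simp: mmul_def)

lemma mmul_sum_left: "mmul V (\<lambda>x y. \<Sum>i\<in>I. c i * X i x y) Y = (\<lambda>x y. \<Sum>i\<in>I. c i * mmul V (X i) Y x y)"
proof (intro ext)
  fix x y
  have "mmul V (\<lambda>x y. \<Sum>i\<in>I. c i * X i x y) Y x y = (\<Sum>z\<in>V. \<Sum>i\<in>I. c i * X i x z * Y z y)"
    unfolding mmul_def by (simp add: sum_distrib_right)
  also have "\<dots> = (\<Sum>i\<in>I. \<Sum>z\<in>V. c i * X i x z * Y z y)" by (rule sum.swap)
  also have "\<dots> = (\<Sum>i\<in>I. c i * mmul V (X i) Y x y)"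
    unfolding mmul_def by (simp add: sum_distrib_left mult.assoc)
  finally show "mmul V (\<lambda>x y. \<Sum>i\<in>I. c i * X i x y) Y x y = (\<Sum>i\<in>I. c i * mmul V (X i) Y x y)" .
qed

lemma sum_apply2: "(\<Sum>v\<in>t. f v) x y = (\<Sum>v\<in>t. f v x y)"
proof (induction t rule: infinite_finite_induct)
  case (infinite A) then show ?case by simp
next
  case empty then show ?case by simp
next
  case (insert a F) then show ?case by simp
qed

lemma dep_powers:
  fixes S :: "nat \<Rightarrow> 'v \<Rightarrow> 'v \<Rightarrow> real"
  assumes fin: "finite V" and sp: "\<And>i. supp V (S i)"
  shows "\<exists>c. (\<exists>i\<le>card (V \<times> V). c i \<noteq> 0) \<and>
             (\<forall>x y. (\<Sum>i\<le>card (V \<times> V). c i * S i x y) = 0)"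
proof -
  define D where "D = card (V \<times> V)"
  interpret vs: vector_space "(\<lambda>(c::real) (X::'v\<Rightarrow>'v\<Rightarrow>real). (\<lambda>x y. c * X x y))"
    by unfold_locales (auto simp: fun_eq_iff algebra_simps)
  show ?thesis
  proof (cases "inj_on S {..D}")
    case False
    then obtain i j where ij: "i \<le> D" "j \<le> D" "i \<noteq> j" "S i = S j"
      unfolding inj_on_def by auto
    define c where "c = (\<lambda>k. if k = i then (1::real) else if k = j then -1 else 0)"
    have "(\<Sum>k\<le>D. c k * S k x y) = 0" for x y
    proof -
      have "(\<Sum>k\<le>D. c k * S k x y) = (\<Sum>k\<in>{i,j}. c k * S k x y)"
        by (rule sum.mono_neutral_right) (use ij in \<open>auto simp: c_def\<close>)
      also have "\<dots> = 0" using ij by (simp add: c_def)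
      finally show ?thesis .
    qed
    moreover have "c i \<noteq> 0" by (simp add: c_def)
    ultimately show ?thesis using ij unfolding D_def by blast
  next
    case True
    define B where "B = (\<lambda>(a,b). (\<lambda>x y. if x = a \<and> y = b then (1::real) else 0)) ` (V \<times> V)"
    have finB: "finite B" unfolding B_def using fin by simp
    have cardB: "card B \<le> D" unfolding B_def D_def by (rule card_image_le) (use fin in simp)
    have inspan: "X \<in> vs.span B" if "supp V X" for X
    proof -
      have "X = (\<Sum>p\<in>V \<times> V. (\<lambda>x y. X (fst p) (snd p) * (\<lambda>x y. if x = fst p \<and> y = snd p then (1::real) else 0) x y))"
      proof (intro ext)
        fix x y
        show "X x y = (\<Sum>p\<in>V \<times> V. (\<lambda>x y. X (fst p) (snd p) * (\<lambda>x y. if x = fst p \<and> y = snd p then (1::real) else 0) x y)) x y"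
        proof (cases "x \<in> V \<and> y \<in> V")
          case True
          have "(\<Sum>p\<in>V \<times> V. (\<lambda>x y. X (fst p) (snd p) * (\<lambda>x y. if x = fst p \<and> y = snd p then (1::real) else 0) x y)) x y
              = (\<Sum>p\<in>V \<times> V. if p = (x,y) then X x y else 0)"
            unfolding sum_apply2 by (intro sum.cong) auto
          also have "\<dots> = X x y" using True fin by simp
          finally show ?thesis by simp
        next
          case False
          then have "X x y = 0" using that unfolding supp_def by auto
          moreover have "(\<Sum>p\<in>V \<times> V. (\<lambda>x y. X (fst p) (snd p) * (\<lambda>x y. if x = fst p \<and> y = snd p then (1::real) else 0) x y)) x y = 0"
            unfolding sum_apply2 using False by (intro sum.neutral) auto
          ultimately show ?thesis by simp
        qed
      qed
      also have "\<dots> \<in> vs.span B"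
      proof (rule vs.span_sum)
        fix p assume "p \<in> V \<times> V"
        then have "(\<lambda>x y. if x = fst p \<and> y = snd p then (1::real) else 0) \<in> B"
          unfolding B_def by (auto intro!: image_eqI[where x = p])
        then show "(\<lambda>x y. X (fst p) (snd p) * (\<lambda>x y. if x = fst p \<and> y = snd p then (1::real) else 0) x y) \<in> vs.span B"
          by (intro vs.span_scale vs.span_base)
      qed
      finally show ?thesis .
    qed
    define M where "M = S ` {..D}"
    have cardM: "card M = Suc D" unfolding M_def using card_image[OF True] by simp
    have "\<not> vs.independent M"
    proof
      assume "vs.independent M"
      moreover have "M \<subseteq> vs.span B" unfolding M_def using inspan sp by auto
      ultimately have "card M \<le> card B" using vs.independent_span_bound[OF finB] by blast
      then show False using cardM cardB by simp
    qed
    then obtain t u where tu: "finite t" "t \<subseteq> M" "(\<Sum>v\<in>t. (\<lambda>x y. u v * v x y)) = 0" "\<exists>v\<in>t. u v \<noteq> 0"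
      unfolding vs.dependent_explicit by blast
    define c where "c = (\<lambda>i. if S i \<in> t then u (S i) else 0)"
    have "(\<Sum>i\<le>D. c i * S i x y) = 0" for x y
    proof -
      have "(\<Sum>i\<le>D. c i * S i x y) = (\<Sum>v\<in>M. (if v \<in> t then u v else 0) * v x y)"
        unfolding M_def c_def by (subst sum.reindex[OF True]) simp
      also have "\<dots> = (\<Sum>v\<in>t. u v * v x y)"
        by (rule sum.mono_neutral_cong_right) (use tu fin in \<open>auto simp: M_def\<close>)
      also have "\<dots> = (\<Sum>v\<in>t. (\<lambda>x y. u v * v x y)) x y" by (simp add: sum_apply2)
      also have "\<dots> = 0" using tu(3) by simp
      finally show ?thesis .
    qed
    moreover obtain v where "v \<in> t" "u v \<noteq> 0" using tu by blast
    moreover then obtain i where "i \<le> D" "v = S i" using tu unfolding M_def by auto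
    ultimately have "(\<exists>i\<le>D. c i \<noteq> 0) \<and> (\<forall>x y. (\<Sum>i\<le>D. c i * S i x y) = 0)"
      by (auto simp: c_def)
    then show ?thesis unfolding D_def by blast
  qed
qed

lemma kernel_sq:
  fixes A Z :: "'v \<Rightarrow> 'v \<Rightarrow> real"
  assumes fin: "finite V" and sA: "supp V A" and sym: "\<And>x y. A x y = A y x"
    and z: "mmul V Z (mmul V A A) = (\<lambda>x y. 0)"
  shows "mmul V Z A = (\<lambda>x y. 0)"
proof (intro ext)
  fix x y
  define P where "P = (\<lambda>y. mmul V Z A x y)"
  have inner: "(\<Sum>y\<in>V. A a y * P y) = 0" for a
  proof -
    have "(\<Sum>y\<in>V. A a y * P y) = (\<Sum>y\<in>V. \<Sum>b\<in>V. Z x b * (A b y * A y a))"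
      unfolding P_def mmul_def by (intro sum.cong refl) (simp add: sum_distrib_left sym[of a] mult_ac)
    also have "\<dots> = (\<Sum>b\<in>V. \<Sum>y\<in>V. Z x b * (A b y * A y a))" by (rule sum.swap)
    also have "\<dots> = mmul V Z (mmul V A A) x a"
      unfolding mmul_def by (simp add: sum_distrib_left)
    also have "\<dots> = 0" using z by simp
    finally show ?thesis .
  qed
  have "(\<Sum>y\<in>V. P y * P y) = (\<Sum>y\<in>V. \<Sum>a\<in>V. Z x a * (A a y * P y))"
  proof (intro sum.cong refl)
    fix y assume "y \<in> V"
    have "P y = (\<Sum>a\<in>V. Z x a * A a y)" by (simp add: P_def mmul_def)
    then have "P y * P y = (\<Sum>a\<in>V. Z x a * A a y) * P y" by simp
    also have "\<dots> = (\<Sum>a\<in>V. Z x a * (A a y * P y))" by (simp add: sum_distrib_left sum_distrib_right mult_ac)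
    finally show "P y * P y = (\<Sum>a\<in>V. Z x a * (A a y * P y))" .
  qed
  also have "\<dots> = (\<Sum>a\<in>V. \<Sum>y\<in>V. Z x a * (A a y * P y))" by (rule sum.swap)
  also have "\<dots> = (\<Sum>a\<in>V. Z x a * (\<Sum>y\<in>V. A a y * P y))" by (simp add: sum_distrib_left)
  also have "\<dots> = 0" by (simp add: inner)
  finally have sq0: "(\<Sum>y\<in>V. P y * P y) = 0" .
  show "mmul V Z A x y = 0"
  proof (cases "y \<in> V")
    case True
    have "\<forall>y\<in>V. P y * P y = 0"
      using sq0 fin by (subst sum_nonneg_eq_0_iff[symmetric]) auto
    then show ?thesis using True unfolding P_def by simp
  next
    case False
    then show ?thesis using sA unfolding mmul_def supp_def by (intro sum.neutral) auto
  qed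
qed

lemma mpow_2: assumes "finite V" "supp V A" shows "mpow V A 2 = mmul V A A"
proof -
  have "mpow V A 2 = mpow V A (1 + 1)" by (simp only: one_add_one)
  also have "\<dots> = mmul V (mpow V A 1) (mpow V A 1)" by (rule mpow_add[OF assms])
  also have "\<dots> = mmul V A A" by (simp only: mpow_1[OF assms])
  finally show ?thesis .
qed

lemma kernel_pow:
  fixes A Z :: "'v \<Rightarrow> 'v \<Rightarrow> real"
  assumes fin: "finite V" and sA: "supp V A" and sym: "\<And>x y. A x y = A y x"
  shows "n \<ge> 1 \<Longrightarrow> mmul V Z (mpow V A n) = (\<lambda>x y. 0) \<Longrightarrow> mmul V Z A = (\<lambda>x y. 0)"
proof (induction n rule: nat_less_induct)
  case (1 n)
  show ?case
  proof (cases "n = 1")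
    case True
    then show ?thesis using "1.prems" mpow_1[OF fin sA] by simp
  next
    case False
    then obtain m where m: "n = Suc (Suc m)" using "1.prems" by (cases n; cases "n - 1") auto
    have "mmul V Z (mpow V A n) = mmul V Z (mmul V (mpow V A m) (mpow V A 2))"
      using mpow_add[OF fin sA, of m 2] m by simp
    also have "\<dots> = mmul V (mmul V Z (mpow V A m)) (mmul V A A)"
      by (simp only: mpow_2[OF fin sA] mmul_assoc[OF fin])
    finally have "mmul V (mmul V Z (mpow V A m)) (mmul V A A) = (\<lambda>x y. 0)" using "1.prems" by simp
    then have "mmul V (mmul V Z (mpow V A m)) A = (\<lambda>x y. 0)" by (rule kernel_sq[OF fin sA sym])
    then have "mmul V Z (mpow V A (Suc m)) = (\<lambda>x y. 0)"
      by (simp add: mmul_assoc[OF fin, symmetric])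
    then show ?thesis using "1.IH" m by auto
  qed
qed

lemma phi_lin:
  "(\<Sum>x\<in>V. \<Sum>y\<in>V. (\<Sum>i\<in>I. c i * X i x y) * (N x y::real)) = (\<Sum>i\<in>I. c i * (\<Sum>x\<in>V. \<Sum>y\<in>V. X i x y * N x y))"
proof -
  have "(\<Sum>x\<in>V. \<Sum>y\<in>V. (\<Sum>i\<in>I. c i * X i x y) * N x y) = (\<Sum>x\<in>V. \<Sum>y\<in>V. \<Sum>i\<in>I. c i * (X i x y * N x y))"
    by (simp add: sum_distrib_right sum_distrib_left mult_ac)
  also have "\<dots> = (\<Sum>x\<in>V. \<Sum>i\<in>I. \<Sum>y\<in>V. c i * (X i x y * N x y))"
    by (intro sum.cong refl sum.swap)
  also have "\<dots> = (\<Sum>i\<in>I. \<Sum>x\<in>V. \<Sum>y\<in>V. c i * (X i x y * N x y))" by (rule sum.swap)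
  also have "\<dots> = (\<Sum>i\<in>I. c i * (\<Sum>x\<in>V. \<Sum>y\<in>V. X i x y * N x y))"
    by (simp add: sum_distrib_left)
  finally show ?thesis .
qed

lemma interp:
  fixes A N :: "'v \<Rightarrow> 'v \<Rightarrow> real"
  assumes fin: "finite V" and sA: "supp V A" and sym: "\<And>x y. A x y = A y x"
    and hyp: "\<And>j. j \<ge> j0 \<Longrightarrow> (\<Sum>x\<in>V. \<Sum>y\<in>V. mpow V A (2*j+1) x y * N x y) = 0"
  shows "(\<Sum>x\<in>V. \<Sum>y\<in>V. A x y * N x y) = 0"
proof -
  define \<phi> where "\<phi> X = (\<Sum>x\<in>V. \<Sum>y\<in>V. X x y * N x y)" for X :: "'v \<Rightarrow> 'v \<Rightarrow> real"
  define \<psi> where "\<psi> t = \<phi> (mpow V A (2*t+1))" for t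
  define D where "D = card (V \<times> V)"
  have "\<exists>c. (\<exists>i\<le>card (V \<times> V). c i \<noteq> 0) \<and> (\<forall>x y. (\<Sum>i\<le>card (V \<times> V). c i * mpow V A (2*i) x y) = 0)"
    by (rule dep_powers[OF fin]) (rule supp_mpow[OF sA])
  then obtain c where c: "\<exists>i\<le>D. c i \<noteq> 0" "\<And>x y. (\<Sum>i\<le>D. c i * mpow V A (2*i) x y) = 0"
    unfolding D_def by blast
  define r where "r = (LEAST i. c i \<noteq> 0)"
  obtain i0 where i0: "i0 \<le> D" "c i0 \<noteq> 0" using c(1) by blast
  have cr: "c r \<noteq> 0" unfolding r_def by (rule LeastI[where P="\<lambda>i. c i \<noteq> 0", OF i0(2)])
  have "r \<le> i0" unfolding r_def by (rule Least_le[where P="\<lambda>i. c i \<noteq> 0", OF i0(2)])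
  then have rD: "r \<le> D" using i0(1) by simp
  have below: "c i = 0" if "i < r" for i
    using not_less_Least[where P="\<lambda>i. c i \<noteq> 0", of i] that unfolding r_def by simp
  define Y where "Y = (\<lambda>x y. \<Sum>i\<in>{r..D}. c i * mpow V A (2*(i-r)) x y)"
  have sY: "supp V Y" unfolding Y_def supp_def using supp_mpow[OF sA] unfolding supp_def by auto
  have Y1: "mmul V Y (mpow V A (2*r)) = (\<lambda>x y. 0)"
  proof -
    have "mmul V Y (mpow V A (2*r)) = (\<lambda>x y. \<Sum>i\<in>{r..D}. c i * mmul V (mpow V A (2*(i-r))) (mpow V A (2*r)) x y)"
      unfolding Y_def by (rule mmul_sum_left)
    also have "\<dots> = (\<lambda>x y. \<Sum>i\<in>{r..D}. c i * mpow V A (2*i) x y)"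
    proof (intro ext sum.cong refl)
      fix x y i assume "i \<in> {r..D}"
      then have "2*(i-r) + 2*r = 2*i" by auto
      then show "c i * mmul V (mpow V A (2*(i-r))) (mpow V A (2*r)) x y = c i * mpow V A (2*i) x y"
        using mpow_add[OF fin sA, of "2*(i-r)" "2*r"] by simp
    qed
    also have "\<dots> = (\<lambda>x y. \<Sum>i\<le>D. c i * mpow V A (2*i) x y)"
    proof (intro ext)
      fix x y
      show "(\<Sum>i\<in>{r..D}. c i * mpow V A (2*i) x y) = (\<Sum>i\<le>D. c i * mpow V A (2*i) x y)"
        by (rule sum.mono_neutral_left) (auto simp: below)
    qed
    also have "\<dots> = (\<lambda>x y. 0)" using c(2) by simp
    finally show ?thesis .
  qed
  have YA: "mmul V Y A = (\<lambda>x y. 0)"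
  proof (cases "r = 0")
    case True
    then have "Y = (\<lambda>x y. 0)" using Y1 mmul_id_right[OF fin sY, of A] by simp
    then show ?thesis unfolding mmul_def by simp
  next
    case False
    then show ?thesis using kernel_pow[OF fin sA sym, of "2*r" Y] Y1 by simp
  qed
  have rec: "(\<Sum>i\<in>{r..D}. c i * \<psi> (i - r + s)) = 0" for s
  proof -
    have "mmul V (mmul V Y A) (mpow V A (2*s)) = (\<lambda>x y. 0)"
      by (simp only: YA) (simp add: mmul_def)
    moreover have "mmul V (mmul V Y A) (mpow V A (2*s)) = mmul V Y (mpow V A (2*s+1))"
      by (simp only: mmul_assoc[OF fin] Suc_eq_plus1[symmetric] mpow_Suc_left[OF fin sA])
    moreover have "mmul V Y (mpow V A (2*s+1)) = (\<lambda>x y. \<Sum>i\<in>{r..D}. c i * mpow V A (2*(i-r+s)+1) x y)"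
    proof -
      have "mmul V Y (mpow V A (2*s+1)) = (\<lambda>x y. \<Sum>i\<in>{r..D}. c i * mmul V (mpow V A (2*(i-r))) (mpow V A (2*s+1)) x y)"
        unfolding Y_def by (rule mmul_sum_left)
      also have "\<dots> = (\<lambda>x y. \<Sum>i\<in>{r..D}. c i * mpow V A (2*(i-r+s)+1) x y)"
      proof (intro ext sum.cong refl)
        fix x y i
        have "2*(i-r) + (2*s+1) = 2*(i-r+s)+1" by simp
        then show "c i * mmul V (mpow V A (2*(i-r))) (mpow V A (2*s+1)) x y = c i * mpow V A (2*(i-r+s)+1) x y"
          using mpow_add[OF fin sA, of "2*(i-r)" "2*s+1"] by simp
      qed
      finally show ?thesis .
    qed
    ultimately have "(\<lambda>x y. \<Sum>i\<in>{r..D}. c i * mpow V A (2*(i-r+s)+1) x y) = (\<lambda>x y. 0)" by simp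
    then have "\<phi> (\<lambda>x y. \<Sum>i\<in>{r..D}. c i * mpow V A (2*(i-r+s)+1) x y) = \<phi> (\<lambda>x y. 0)"
      by (rule arg_cong)
    also have "\<phi> (\<lambda>x y. 0) = 0" unfolding \<phi>_def by simp
    finally show ?thesis unfolding \<phi>_def \<psi>_def by (simp only: phi_lin)
  qed
  have all: "\<forall>s. s + n \<ge> j0 \<longrightarrow> \<psi> s = 0" for n
  proof (induction n)
    case 0
    then show ?case using hyp unfolding \<psi>_def \<phi>_def by simp
  next
    case (Suc n)
    show ?case
    proof (intro allI impI)
      fix s assume s: "s + Suc n \<ge> j0"
      have "(\<Sum>i\<in>{r..D}. c i * \<psi> (i - r + s)) = c r * \<psi> s + (\<Sum>i\<in>{Suc r..D}. c i * \<psi> (i - r + s))"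
        using rD by (subst sum.atLeast_Suc_atMost) auto
      moreover have "(\<Sum>i\<in>{Suc r..D}. c i * \<psi> (i - r + s)) = 0"
      proof (intro sum.neutral ballI)
        fix i assume "i \<in> {Suc r..D}"
        then have "(i - r + s) + n \<ge> j0" using s by auto
        then show "c i * \<psi> (i - r + s) = 0" using Suc.IH by simp
      qed
      ultimately have "c r * \<psi> s = 0" using rec[of s] by simp
      then show "\<psi> s = 0" using cr by simp
    qed
  qed
  have "\<psi> 0 = 0" using all[of j0] by simp
  then show ?thesis unfolding \<psi>_def \<phi>_def using mpow_1[OF fin sA] by simp
qed

definition amat :: "'a graph \<Rightarrow> 'a \<Rightarrow> 'a \<Rightarrow> nat" where
  "amat G x y = (if {x, y} \<in> edges G then 1 else 0)"

definition W :: "'a graph \<Rightarrow> nat \<Rightarrow> 'a \<Rightarrow> 'a \<Rightarrow> nat" where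
  "W G n = mpow (verts G) (amat G) n"

definition ends :: "'a set \<Rightarrow> 'a \<times> 'a" where
  "ends e = (SOME p. e = {fst p, snd p})"

definition Phi :: "'v graph \<Rightarrow> ('v set \<Rightarrow> nat) \<Rightarrow> 'a graph \<Rightarrow> nat" where
  "Phi F l G = (\<Sum>f \<in> verts F \<rightarrow>\<^sub>E verts G. \<Prod>e \<in> edges F. W G (l e) (f (fst (ends e))) (f (snd (ends e))))"

lemma amat_sym: "amat G x y = amat G y x"
  unfolding amat_def by (simp add: insert_commute)

lemma wf_edge_sub: "wf_graph G \<Longrightarrow> e \<in> edges G \<Longrightarrow> e \<subseteq> verts G"
  unfolding wf_graph_def by auto

lemma wf_fin: "wf_graph G \<Longrightarrow> finite (verts G)"
  unfolding wf_graph_def by auto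

lemma wf_fin_edges: "wf_graph G \<Longrightarrow> finite (edges G)"
proof -
  assume w: "wf_graph G"
  then have "edges G \<subseteq> Pow (verts G)" unfolding wf_graph_def by auto
  then show ?thesis using finite_subset wf_fin[OF w] by blast
qed

lemma simple_wf: "simple_graph G \<Longrightarrow> wf_graph G"
  unfolding simple_graph_def by auto

lemma supp_amat: "wf_graph G \<Longrightarrow> supp (verts G) (amat G)"
  unfolding supp_def amat_def using wf_edge_sub by fastforce

lemma W1: "wf_graph G \<Longrightarrow> W G 1 = amat G"
  unfolding W_def by (rule mpow_1[OF wf_fin supp_amat])

lemma W_Suc_left: assumes "wf_graph G" shows "W G (Suc n) x y = (\<Sum>z\<in>verts G. amat G x z * W G n z y)"
proof -
  have "mpow (verts G) (amat G) (Suc n) = mmul (verts G) (amat G) (mpow (verts G) (amat G) n)"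
    by (rule mpow_Suc_left[OF wf_fin[OF assms] supp_amat[OF assms]])
  then show ?thesis unfolding W_def by (simp only: mmul_def)
qed

lemma W_add: assumes "wf_graph G" shows "W G (m + n) x y = (\<Sum>z\<in>verts G. W G m x z * W G n z y)"
proof -
  have "mpow (verts G) (amat G) (m + n) = mmul (verts G) (mpow (verts G) (amat G) m) (mpow (verts G) (amat G) n)"
    by (rule mpow_add[OF wf_fin[OF assms] supp_amat[OF assms]])
  then show ?thesis unfolding W_def by (simp only: mmul_def)
qed

lemma ends_eq: "\<exists>a b. e = {a, b} \<Longrightarrow> e = {fst (ends e), snd (ends e)}"
proof -
  assume "\<exists>a b. e = {a, b}"
  then have "\<exists>p. e = {fst p, snd p}" by auto
  then show ?thesis unfolding ends_def by (rule someI_ex)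
qed

lemma card2_ex: "card e = 2 \<Longrightarrow> \<exists>a b. e = {a, b}"
  by (auto simp: card_2_iff)

lemma simple_edge_ends:
  assumes "simple_graph F" "e \<in> edges F"
  shows "e = {fst (ends e), snd (ends e)}" "fst (ends e) \<noteq> snd (ends e)"
    "fst (ends e) \<in> verts F" "snd (ends e) \<in> verts F"
proof -
  have c: "card e = 2" using assms unfolding simple_graph_def by auto
  show e: "e = {fst (ends e), snd (ends e)}" by (rule ends_eq[OF card2_ex[OF c]])
  show "fst (ends e) \<noteq> snd (ends e)"
  proof
    assume "fst (ends e) = snd (ends e)"
    then have "e = {fst (ends e)}" using e by simp
    then obtain a where "e = {a}" by blast
    then have "card e = 1" by simp
    then show False using c by simp
  qed
  have "e \<subseteq> verts F" using assms wf_edge_sub simple_wf by blast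
  then show "fst (ends e) \<in> verts F" "snd (ends e) \<in> verts F" using e by auto
qed

lemma prod_indicator:
  "finite S \<Longrightarrow> (\<Prod>e\<in>S. (if P e then 1 else 0::nat)) = (if \<forall>e\<in>S. P e then 1 else 0)"
proof (cases "\<forall>e\<in>S. P e")
  case True
  then show ?thesis by simp
next
  case False
  assume "finite S"
  then show ?thesis using False by (auto simp: prod_zero_iff)
qed

lemma hom_Phi:
  assumes F: "simple_graph F" and G: "wf_graph G"
  shows "hom F G = Phi F (\<lambda>_. 1) G"
proof -
  have finF: "finite (edges F)" using wf_fin_edges[OF simple_wf[OF F]] .
  have finP: "finite (verts F \<rightarrow>\<^sub>E verts G)" using wf_fin[OF simple_wf[OF F]] wf_fin[OF G] by (intro finite_PiE) auto
  have "Phi F (\<lambda>_. 1) G = (\<Sum>f \<in> verts F \<rightarrow>\<^sub>E verts G. \<Prod>e \<in> edges F. (if f ` e \<in> edges G then 1 else 0))"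
    unfolding Phi_def W1[OF G]
  proof (intro sum.cong refl prod.cong)
    fix f e assume "f \<in> verts F \<rightarrow>\<^sub>E verts G" "e \<in> edges F"
    define a where "a = fst (ends e)"
    define b where "b = snd (ends e)"
    have eab: "e = {a, b}" using simple_edge_ends(1)[OF F \<open>e \<in> edges F\<close>] unfolding a_def b_def .
    have "f ` e = {f a, f b}" using eab by simp
    then show "amat G (f (fst (ends e))) (f (snd (ends e))) = (if f ` e \<in> edges G then 1 else 0)"
      unfolding amat_def a_def b_def by simp
  qed
  also have "\<dots> = (\<Sum>f \<in> verts F \<rightarrow>\<^sub>E verts G. (if \<forall>e\<in>edges F. f ` e \<in> edges G then 1 else 0))"
    using finF by (simp add: prod_indicator)
  also have "\<dots> = card (homs F G)"
    unfolding homs_def using finP by (simp add: sum.If_cases Int_def)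
  finally show ?thesis unfolding hom_def by simp
qed

lemma Phi_cong: "(\<And>e. e \<in> edges F \<Longrightarrow> l e = m e) \<Longrightarrow> Phi F l G = Phi F m G"
  unfolding Phi_def by (intro sum.cong refl prod.cong) auto

fun pw :: "'a graph \<Rightarrow> 'a list \<Rightarrow> nat" where
  "pw G (a # b # rest) = amat G a b * pw G (b # rest)"
| "pw G _ = 1"

lemma pw_prod: "pw G q = (\<Prod>i<length q - 1. amat G (q ! i) (q ! Suc i))"
proof (induction G q rule: pw.induct)
  case (1 G a b rest)
  have "(\<Prod>i<length (a # b # rest) - 1. amat G ((a # b # rest) ! i) ((a # b # rest) ! Suc i))
      = (\<Prod>i<Suc (length (b # rest) - 1). amat G ((a # b # rest) ! i) ((a # b # rest) ! Suc i))" by simp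
  also have "\<dots> = amat G a b * (\<Prod>i<length (b # rest) - 1. amat G ((b # rest) ! i) ((b # rest) ! Suc i))"
    by (subst prod.lessThan_Suc_shift) simp
  finally show ?case using "1.IH" by simp
qed auto

lemma sum_PiE_Un:
  assumes "A \<inter> B = {}"
  shows "(\<Sum>f \<in> (A \<union> B) \<rightarrow>\<^sub>E T. g f) = (\<Sum>f1 \<in> A \<rightarrow>\<^sub>E T. \<Sum>f2 \<in> B \<rightarrow>\<^sub>E T. g (\<lambda>x. if x \<in> A then f1 x else f2 x))"
proof -
  have "(\<Sum>f1 \<in> A \<rightarrow>\<^sub>E T. \<Sum>f2 \<in> B \<rightarrow>\<^sub>E T. g (\<lambda>x. if x \<in> A then f1 x else f2 x))
      = (\<Sum>(f1, f2) \<in> (A \<rightarrow>\<^sub>E T) \<times> (B \<rightarrow>\<^sub>E T). g (\<lambda>x. if x \<in> A then f1 x else f2 x))"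
    by (rule sum.cartesian_product)
  also have "\<dots> = (\<Sum>f \<in> (A \<union> B) \<rightarrow>\<^sub>E T. g f)"
  proof (rule sum.reindex_bij_witness[of _ "\<lambda>f. (restrict f A, restrict f B)" "\<lambda>(f1, f2). (\<lambda>x. if x \<in> A then f1 x else f2 x)"])
    fix f assume f: "f \<in> (A \<union> B) \<rightarrow>\<^sub>E T"
    show "(case (restrict f A, restrict f B) of (f1, f2) \<Rightarrow> \<lambda>x. if x \<in> A then f1 x else f2 x) = f"
      using f by (auto simp: fun_eq_iff PiE_def extensional_def)
    show "(restrict f A, restrict f B) \<in> (A \<rightarrow>\<^sub>E T) \<times> (B \<rightarrow>\<^sub>E T)" using f by auto
  next
    fix p assume p: "p \<in> (A \<rightarrow>\<^sub>E T) \<times> (B \<rightarrow>\<^sub>E T)"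
    obtain f1 f2 where pp: "p = (f1, f2)" by (cases p)
    have f1: "f1 \<in> A \<rightarrow>\<^sub>E T" and f2: "f2 \<in> B \<rightarrow>\<^sub>E T" using p pp by auto
    show "(restrict (case p of (f1, f2) \<Rightarrow> \<lambda>x. if x \<in> A then f1 x else f2 x) A,
           restrict (case p of (f1, f2) \<Rightarrow> \<lambda>x. if x \<in> A then f1 x else f2 x) B) = p"
      using f1 f2 assms unfolding pp by (auto simp: fun_eq_iff PiE_def extensional_def)
    show "(case p of (f1, f2) \<Rightarrow> \<lambda>x. if x \<in> A then f1 x else f2 x) \<in> (A \<union> B) \<rightarrow>\<^sub>E T"
      using f1 f2 unfolding pp by (auto simp: PiE_def extensional_def)
    show "g (case p of (f1, f2) \<Rightarrow> \<lambda>x. if x \<in> A then f1 x else f2 x) =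
          (case p of (f1, f2) \<Rightarrow> g (\<lambda>x. if x \<in> A then f1 x else f2 x))"
      unfolding pp by simp
  qed
  finally show ?thesis by simp
qed

lemma walk_sum:
  assumes G: "wf_graph G"
  shows "distinct ws \<Longrightarrow> (\<Sum>h \<in> set ws \<rightarrow>\<^sub>E verts G. pw G (x # map h ws @ [y])) = W G (Suc (length ws)) x y"
proof (induction ws arbitrary: x)
  case Nil
  then show ?case using W1[OF G] by simp
next
  case (Cons w ws)
  have wn: "w \<notin> set ws" and d: "distinct ws" using Cons.prems by auto
  have "(\<Sum>h \<in> set (w # ws) \<rightarrow>\<^sub>E verts G. pw G (x # map h (w # ws) @ [y]))
      = (\<Sum>h \<in> insert w (set ws) \<rightarrow>\<^sub>E verts G. amat G x (h w) * pw G (h w # map h ws @ [y]))"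
    by simp
  also have "\<dots> = (\<Sum>(z, h) \<in> verts G \<times> (set ws \<rightarrow>\<^sub>E verts G). amat G x z * pw G (z # map h ws @ [y]))"
  proof (rule sum.reindex_bij_witness[of _ "\<lambda>(z, h). h(w := z)" "\<lambda>h. (h w, h(w := undefined))"])
    fix p assume p: "p \<in> verts G \<times> (set ws \<rightarrow>\<^sub>E verts G)"
    obtain z h where pp: "p = (z, h)" by (cases p)
    show "(case p of (z, h) \<Rightarrow> h(w := z)) \<in> insert w (set ws) \<rightarrow>\<^sub>E verts G"
      using p unfolding pp by (auto simp: PiE_def extensional_def)
    show "((case p of (z, h) \<Rightarrow> h(w := z)) w, (case p of (z, h) \<Rightarrow> h(w := z))(w := undefined)) = p"
      using p wn unfolding pp by (auto simp: fun_eq_iff PiE_def extensional_def)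
  next
    fix h assume h: "h \<in> insert w (set ws) \<rightarrow>\<^sub>E verts G"
    show "(h w, h(w := undefined)) \<in> verts G \<times> (set ws \<rightarrow>\<^sub>E verts G)"
      using h wn by (auto simp: PiE_def extensional_def)
    show "(case (h w, h(w := undefined)) of (z, h) \<Rightarrow> h(w := z)) = h" by simp
    have mh: "map (h(w := undefined)) ws = map h ws" using wn by (intro map_cong) auto
    then show "(case (h w, h(w := undefined)) of (z, h) \<Rightarrow> amat G x z * pw G (z # map h ws @ [y]))
        = amat G x (h w) * pw G (h w # map h ws @ [y])" by (simp only: prod.case mh)
  qed
  also have "\<dots> = (\<Sum>z \<in> verts G. \<Sum>h \<in> set ws \<rightarrow>\<^sub>E verts G. amat G x z * pw G (z # map h ws @ [y]))"
    by (rule sum.cartesian_product[symmetric])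
  also have "\<dots> = (\<Sum>z \<in> verts G. amat G x z * W G (Suc (length ws)) z y)"
    by (simp add: sum_distrib_left[symmetric] Cons.IH[OF d])
  also have "\<dots> = W G (Suc (Suc (length ws))) x y" by (rule W_Suc_left[OF G, symmetric])
  finally show ?case by simp
qed

lemma Phi_subdivide:
  fixes F :: "'v graph" and G :: "'b graph"
  assumes G: "wf_graph G" and F: "simple_graph F" and e0: "e0 \<in> edges F"
    and u: "fst (ends e0) = u" and v: "snd (ends e0) = v"
    and ws: "ws \<noteq> []" "distinct ws" "set ws \<inter> verts F = {}"
    and l1: "\<forall>p \<in> path_edges (u # ws @ [v]). l p = 1"
  shows "Phi (subdivide_edge F u v ws) l G = Phi F (l(e0 := Suc (length ws))) G"
proof -
  have e0uv: "e0 = {u, v}" and uv: "u \<noteq> v" and uV: "u \<in> verts F" and vV: "v \<in> verts F"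
    using simple_edge_ends[OF F e0] u v by auto
  define p where "p = u # ws @ [v]"
  define PE where "PE = path_edges p"
  define E1 where "E1 = edges F - {e0}"
  define mg where "mg f1 f2 = (\<lambda>x. if x \<in> verts F then f1 x else f2 x)" for f1 f2 :: "'v \<Rightarrow> 'b"
  have finVF: "finite (verts F)" using wf_fin[OF simple_wf[OF F]] .
  have finEF: "finite (edges F)" using wf_fin_edges[OF simple_wf[OF F]] .
  have finE1: "finite E1" unfolding E1_def using finEF by simp
  have dp: "distinct p" using uv uV vV ws unfolding p_def by auto
  have setp: "set p \<subseteq> verts F \<union> set ws" unfolding p_def using uV vV by auto
  have PE_img: "PE = (\<lambda>i. {p!i, p!Suc i}) ` {..<length p - 1}"
    unfolding PE_def path_edges_def by (auto simp: image_def)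
  have finPE: "finite PE" unfolding PE_img by simp
  have inj: "inj_on (\<lambda>i. {p!i, p!Suc i}) {..<length p - 1}"
  proof (rule inj_onI)
    fix i j assume i: "i \<in> {..<length p - 1}" and j: "j \<in> {..<length p - 1}"
      and eq: "{p!i, p!Suc i} = {p!j, p!Suc j}"
    then have "(p!i = p!j \<and> p!Suc i = p!Suc j) \<or> (p!i = p!Suc j \<and> p!Suc i = p!j)"
      by (simp add: doubleton_eq_iff)
    then show "i = j" using i j by (auto simp: nth_eq_iff_index_eq[OF dp])
  qed
  have PEws: "p!i \<in> set ws \<or> p!Suc i \<in> set ws" if "i < length p - 1" for i
  proof (cases i)
    case 0
    then show ?thesis using ws(1) unfolding p_def by (cases ws) auto
  next
    case (Suc j)
    then have "j < length ws" using that unfolding p_def by simp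
    then show ?thesis unfolding p_def Suc by (simp add: nth_append)
  qed
  have disj: "E1 \<inter> PE = {}"
  proof (rule ccontr)
    assume "E1 \<inter> PE \<noteq> {}"
    then obtain i where i: "i < length p - 1" and inE1: "{p!i, p!Suc i} \<in> E1"
      unfolding PE_img by auto
    have "{p!i, p!Suc i} \<subseteq> verts F" using inE1 wf_edge_sub[OF simple_wf[OF F]] unfolding E1_def by auto
    then show False using PEws[OF i] ws(3) by auto
  qed
  have edgesF': "edges (subdivide_edge F u v ws) = E1 \<union> PE"
    unfolding subdivide_edge_def E1_def PE_def p_def e0uv by simp
  have vertsF': "verts (subdivide_edge F u v ws) = verts F \<union> set ws"
    unfolding subdivide_edge_def by simp
  define T where "T f e = W G (l e) (f (fst (ends e))) (f (snd (ends e)))" for f :: "'v \<Rightarrow> 'b" and e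
  have pathprod: "(\<Prod>e\<in>PE. T f e) = pw G (map f p)" if f: "f \<in> (verts F \<union> set ws) \<rightarrow>\<^sub>E verts G" for f
  proof -
    have "(\<Prod>e\<in>PE. T f e) = (\<Prod>i<length p - 1. T f {p!i, p!Suc i})"
      unfolding PE_img by (subst prod.reindex[OF inj]) (simp add: o_def)
    also have "\<dots> = (\<Prod>i<length p - 1. amat G (f (p!i)) (f (p!Suc i)))"
    proof (rule prod.cong[OF refl])
      fix i assume i: "i \<in> {..<length p - 1}"
      define e where "e = {p!i, p!Suc i}"
      have "e \<in> PE" using i unfolding PE_img e_def by auto
      then have le: "l e = 1" using l1 unfolding PE_def p_def by auto
      have ee: "e = {fst (ends e), snd (ends e)}" by (rule ends_eq) (auto simp: e_def)
      define a where "a = fst (ends e)"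
      define b where "b = snd (ends e)"
      have eab: "e = {a, b}" using ee unfolding a_def b_def .
      have "p!i \<in> set p" "p!Suc i \<in> set p" using i by auto
      then have eV: "e \<subseteq> verts F \<union> set ws" using setp unfolding e_def by auto
      have "T f e = W G 1 (f a) (f b)" unfolding T_def le a_def b_def ..
      also have "\<dots> = amat G (f a) (f b)" using W1[OF G] by simp
      also have "\<dots> = (if f ` e \<in> edges G then 1 else 0)" unfolding amat_def eab by simp
      also have "\<dots> = amat G (f (p!i)) (f (p!Suc i))" unfolding amat_def e_def by simp
      finally show "T f {p!i, p!Suc i} = amat G (f (p!i)) (f (p!Suc i))" unfolding e_def .
    qed
    also have "\<dots> = pw G (map f p)"
      unfolding pw_prod by (intro prod.cong) auto
    finally show ?thesis .
  qed
  have "Phi (subdivide_edge F u v ws) l G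
      = (\<Sum>f \<in> (verts F \<union> set ws) \<rightarrow>\<^sub>E verts G. (\<Prod>e\<in>E1. T f e) * (\<Prod>e\<in>PE. T f e))"
    unfolding Phi_def vertsF' edgesF' T_def by (simp add: prod.union_disjoint[OF finE1 finPE disj])
  also have "\<dots> = (\<Sum>f \<in> (verts F \<union> set ws) \<rightarrow>\<^sub>E verts G. (\<Prod>e\<in>E1. T f e) * pw G (map f p))"
    by (intro sum.cong refl) (simp add: pathprod)
  also have "\<dots> = (\<Sum>f1 \<in> verts F \<rightarrow>\<^sub>E verts G. \<Sum>f2 \<in> set ws \<rightarrow>\<^sub>E verts G.
                     (\<Prod>e\<in>E1. T (mg f1 f2) e) * pw G (map (mg f1 f2) p))"
    unfolding mg_def by (rule sum_PiE_Un) (use ws(3) in auto)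
  also have "\<dots> = (\<Sum>f1 \<in> verts F \<rightarrow>\<^sub>E verts G. (\<Prod>e\<in>E1. T f1 e) *
                     (\<Sum>f2 \<in> set ws \<rightarrow>\<^sub>E verts G. pw G (f1 u # map f2 ws @ [f1 v])))"
  proof (intro sum.cong refl)
    fix f1 assume "f1 \<in> verts F \<rightarrow>\<^sub>E verts G"
    have "(\<Sum>f2 \<in> set ws \<rightarrow>\<^sub>E verts G. (\<Prod>e\<in>E1. T (mg f1 f2) e) * pw G (map (mg f1 f2) p))
        = (\<Sum>f2 \<in> set ws \<rightarrow>\<^sub>E verts G. (\<Prod>e\<in>E1. T f1 e) * pw G (f1 u # map f2 ws @ [f1 v]))"
    proof (intro sum.cong refl arg_cong2[where f = "(*)"] prod.cong)
      fix f2 e assume "e \<in> E1"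
      then have "e \<in> edges F" unfolding E1_def by simp
      then have "fst (ends e) \<in> verts F" "snd (ends e) \<in> verts F"
        using simple_edge_ends[OF F] by auto
      then show "T (mg f1 f2) e = T f1 e" unfolding T_def mg_def by simp
    next
      fix f2
      have mm: "map (mg f1 f2) ws = map f2 ws" using ws(3) unfolding mg_def by (intro map_cong) auto
      have m1: "mg f1 f2 u = f1 u" "mg f1 f2 v = f1 v" using uV vV unfolding mg_def by auto
      have "map (mg f1 f2) p = mg f1 f2 u # map (mg f1 f2) ws @ [mg f1 f2 v]" unfolding p_def by simp
      then show "pw G (map (mg f1 f2) p) = pw G (f1 u # map f2 ws @ [f1 v])"
        by (simp only: mm m1)
    qed
    then show "(\<Sum>f2 \<in> set ws \<rightarrow>\<^sub>E verts G. (\<Prod>e\<in>E1. T (mg f1 f2) e) * pw G (map (mg f1 f2) p))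
        = (\<Prod>e\<in>E1. T f1 e) * (\<Sum>f2 \<in> set ws \<rightarrow>\<^sub>E verts G. pw G (f1 u # map f2 ws @ [f1 v]))"
      by (simp add: sum_distrib_left)
  qed
  also have "\<dots> = (\<Sum>f1 \<in> verts F \<rightarrow>\<^sub>E verts G. (\<Prod>e\<in>E1. T f1 e) * W G (Suc (length ws)) (f1 u) (f1 v))"
    by (simp add: walk_sum[OF G ws(2)])
  also have "\<dots> = Phi F (l(e0 := Suc (length ws))) G"
    unfolding Phi_def
  proof (intro sum.cong refl)
    fix f1 assume "f1 \<in> verts F \<rightarrow>\<^sub>E verts G"
    have "(\<Prod>e\<in>edges F. W G ((l(e0 := Suc (length ws))) e) (f1 (fst (ends e))) (f1 (snd (ends e))))
        = W G ((l(e0 := Suc (length ws))) e0) (f1 (fst (ends e0))) (f1 (snd (ends e0))) *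
          (\<Prod>e\<in>E1. W G ((l(e0 := Suc (length ws))) e) (f1 (fst (ends e))) (f1 (snd (ends e))))"
      unfolding E1_def by (rule prod.remove[OF finEF e0])
    also have "\<dots> = W G (Suc (length ws)) (f1 u) (f1 v) * (\<Prod>e\<in>E1. T f1 e)"
      unfolding T_def u v by (auto simp: E1_def intro!: prod.cong)
    finally show "(\<Prod>e\<in>E1. T f1 e) * W G (Suc (length ws)) (f1 u) (f1 v)
        = (\<Prod>e\<in>edges F. W G ((l(e0 := Suc (length ws))) e) (f1 (fst (ends e))) (f1 (snd (ends e))))"
      by simp
  qed
  finally show ?thesis .
qed

definition NN :: "'v graph \<Rightarrow> ('v set \<Rightarrow> nat) \<Rightarrow> 'v set \<Rightarrow> 'a graph \<Rightarrow> 'a \<Rightarrow> 'a \<Rightarrow> nat" where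
  "NN F l e0 G x y = (\<Sum>f \<in> verts F \<rightarrow>\<^sub>E verts G.
      if f (fst (ends e0)) = x \<and> f (snd (ends e0)) = y
      then \<Prod>e\<in>edges F - {e0}. W G (l e) (f (fst (ends e))) (f (snd (ends e))) else 0)"

lemma sum_delta2:
  assumes "finite V" "a \<in> V" "b \<in> V"
  shows "(\<Sum>x\<in>V. \<Sum>y\<in>V. if a = x \<and> b = y then g x y else (0::'c::comm_monoid_add)) = g a b"
proof -
  have "(\<Sum>x\<in>V. \<Sum>y\<in>V. if a = x \<and> b = y then g x y else 0) = (\<Sum>x\<in>V. if a = x then (\<Sum>y\<in>V. if b = y then g x y else 0) else 0)"
    by (intro sum.cong refl) auto
  also have "\<dots> = (\<Sum>y\<in>V. if b = y then g a y else 0)" using assms by (simp add: sum.delta)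
  also have "\<dots> = g a b" using assms by (simp add: sum.delta)
  finally show ?thesis .
qed

lemma Phi_decomp:
  fixes F :: "'v graph" and G :: "'a graph"
  assumes F: "simple_graph F" and e0: "e0 \<in> edges F" and G: "wf_graph G"
  shows "Phi F (l(e0 := n)) G = (\<Sum>x\<in>verts G. \<Sum>y\<in>verts G. W G n x y * NN F l e0 G x y)"
proof -
  define R where "R f = (\<Prod>e\<in>edges F - {e0}. W G (l e) (f (fst (ends e))) (f (snd (ends e))))" for f :: "'v \<Rightarrow> 'a"
  have finEF: "finite (edges F)" using wf_fin_edges[OF simple_wf[OF F]] .
  have finVG: "finite (verts G)" using wf_fin[OF G] .
  have "Phi F (l(e0 := n)) G = (\<Sum>f \<in> verts F \<rightarrow>\<^sub>E verts G. W G n (f (fst (ends e0))) (f (snd (ends e0))) * R f)"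
    unfolding Phi_def
  proof (intro sum.cong refl)
    fix f
    show "(\<Prod>e\<in>edges F. W G ((l(e0 := n)) e) (f (fst (ends e))) (f (snd (ends e)))) =
          W G n (f (fst (ends e0))) (f (snd (ends e0))) * R f"
      unfolding R_def by (subst prod.remove[OF finEF e0]) (auto intro!: prod.cong)
  qed
  also have "\<dots> = (\<Sum>f \<in> verts F \<rightarrow>\<^sub>E verts G. \<Sum>x\<in>verts G. \<Sum>y\<in>verts G.
      if f (fst (ends e0)) = x \<and> f (snd (ends e0)) = y then W G n x y * R f else 0)"
  proof (intro sum.cong refl)
    fix f assume f: "f \<in> verts F \<rightarrow>\<^sub>E verts G"
    have "f (fst (ends e0)) \<in> verts G" "f (snd (ends e0)) \<in> verts G"
      using f simple_edge_ends(3,4)[OF F e0] by auto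
    then show "W G n (f (fst (ends e0))) (f (snd (ends e0))) * R f = (\<Sum>x\<in>verts G. \<Sum>y\<in>verts G.
      if f (fst (ends e0)) = x \<and> f (snd (ends e0)) = y then W G n x y * R f else 0)"
      using sum_delta2[OF finVG, of _ _ "\<lambda>x y. W G n x y * R f"] by simp
  qed
  also have "\<dots> = (\<Sum>x\<in>verts G. \<Sum>f \<in> verts F \<rightarrow>\<^sub>E verts G. \<Sum>y\<in>verts G.
      if f (fst (ends e0)) = x \<and> f (snd (ends e0)) = y then W G n x y * R f else 0)"
    by (rule sum.swap)
  also have "\<dots> = (\<Sum>x\<in>verts G. \<Sum>y\<in>verts G. \<Sum>f \<in> verts F \<rightarrow>\<^sub>E verts G.
      if f (fst (ends e0)) = x \<and> f (snd (ends e0)) = y then W G n x y * R f else 0)"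
    by (intro sum.cong refl sum.swap)
  also have "\<dots> = (\<Sum>x\<in>verts G. \<Sum>y\<in>verts G. W G n x y * NN F l e0 G x y)"
    unfolding NN_def R_def sum_distrib_left by (intro sum.cong refl) auto
  finally show ?thesis .
qed

definition gunion :: "'a graph \<Rightarrow> 'a graph \<Rightarrow> ('a + 'a) graph" where
  "gunion G H = \<lparr>verts = Inl ` verts G \<union> Inr ` verts H, edges = (image Inl) ` edges G \<union> (image Inr) ` edges H\<rparr>"

lemma sum_split_sum:
  assumes "finite A" "finite B"
  shows "(\<Sum>p \<in> Inl ` A \<union> Inr ` B. g p) = (\<Sum>a\<in>A. g (Inl a)) + (\<Sum>b\<in>B. g (Inr b))"
proof -
  have "(\<Sum>p \<in> Inl ` A \<union> Inr ` B. g p) = (\<Sum>p \<in> Inl ` A. g p) + (\<Sum>p \<in> Inr ` B. g p)"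
    by (rule sum.union_disjoint) (use assms in auto)
  also have "\<dots> = (\<Sum>a\<in>A. g (Inl a)) + (\<Sum>b\<in>B. g (Inr b))"
    by (simp add: sum.reindex)
  finally show ?thesis .
qed

lemma Inl_pair: "{Inl x, Inl y} = Inl ` {x, y}" by simp
lemma Inr_pair: "{Inr x, Inr y} = Inr ` {x, y}" by simp

lemma amat_U_ll: "amat (gunion G H) (Inl x) (Inl y) = amat G x y"
proof -
  have "{Inl x, Inl y} \<in> (image Inl) ` edges G \<longleftrightarrow> {x, y} \<in> edges G"
    unfolding Inl_pair
  proof
    assume "Inl ` {x, y} \<in> (image Inl) ` edges G"
    then obtain e where e: "e \<in> edges G" "Inl ` {x, y} = Inl ` e" by blast
    then have "{x, y} = e" using inj_image_eq_iff[OF inj_Inl] by blast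
    then show "{x, y} \<in> edges G" using e by simp
  next
    assume "{x, y} \<in> edges G"
    then show "Inl ` {x, y} \<in> (image Inl) ` edges G" by (rule imageI)
  qed
  moreover have "{Inl x, Inl y} \<notin> (image Inr) ` edges H" by auto
  ultimately show ?thesis unfolding amat_def gunion_def by auto
qed

lemma amat_U_rr: "amat (gunion G H) (Inr x) (Inr y) = amat H x y"
proof -
  have "{Inr x, Inr y} \<in> (image Inr) ` edges H \<longleftrightarrow> {x, y} \<in> edges H"
    unfolding Inr_pair
  proof
    assume "Inr ` {x, y} \<in> (image Inr) ` edges H"
    then obtain e where e: "e \<in> edges H" "Inr ` {x, y} = Inr ` e" by blast
    then have "{x, y} = e" using inj_image_eq_iff[OF inj_Inr] by blast
    then show "{x, y} \<in> edges H" using e by simp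
  next
    assume "{x, y} \<in> edges H"
    then show "Inr ` {x, y} \<in> (image Inr) ` edges H" by (rule imageI)
  qed
  moreover have "{Inr x, Inr y} \<notin> (image Inl) ` edges G" by auto
  ultimately show ?thesis unfolding amat_def gunion_def by auto
qed

lemma amat_U_lr: "amat (gunion G H) (Inl x) (Inr y) = 0" "amat (gunion G H) (Inr x) (Inl y) = 0"
  unfolding amat_def gunion_def by auto

lemma wf_gunion:
  assumes G: "wf_graph G" and H: "wf_graph H"
  shows "wf_graph (gunion G H)"
  unfolding wf_graph_def
proof (rule conjI)
  show "finite (verts (gunion G H))" unfolding gunion_def using wf_fin[OF G] wf_fin[OF H] by simp
next
  show "\<forall>e\<in>edges (gunion G H). e \<subseteq> verts (gunion G H) \<and> (card e = 1 \<or> card e = 2)"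
  proof
  fix e assume "e \<in> edges (gunion G H)"
  then consider (l) e' where "e' \<in> edges G" "e = Inl ` e'" | (r) e' where "e' \<in> edges H" "e = Inr ` e'"
    unfolding gunion_def by auto
  then show "e \<subseteq> verts (gunion G H) \<and> (card e = 1 \<or> card e = 2)"
  proof cases
    case l
    then show ?thesis using G unfolding wf_graph_def gunion_def by (auto simp: card_image)
  next
    case r
    then show ?thesis using H unfolding wf_graph_def gunion_def by (auto simp: card_image)
  qed
  qed
qed

lemma W_U_l:
  assumes G: "wf_graph G" and H: "wf_graph H"
  shows "W (gunion G H) n (Inl x) (Inl y) = W G n x y"
proof (induction n arbitrary: y)
  case 0
  then show ?case unfolding W_def gunion_def by auto
next
  case (Suc n)
  have "W (gunion G H) (Suc n) (Inl x) (Inl y)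
      = (\<Sum>z \<in> Inl ` verts G \<union> Inr ` verts H. W (gunion G H) n (Inl x) z * amat (gunion G H) z (Inl y))"
    unfolding W_def by (simp add: mmul_def gunion_def)
  also have "\<dots> = (\<Sum>z \<in> verts G. W G n x z * amat G z y)"
    by (simp add: sum_split_sum wf_fin[OF G] wf_fin[OF H] Suc.IH amat_U_ll amat_U_lr)
  also have "\<dots> = W G (Suc n) x y" unfolding W_def by (simp add: mmul_def)
  finally show ?case .
qed

lemma W_U_r:
  assumes G: "wf_graph G" and H: "wf_graph H"
  shows "W (gunion G H) n (Inr x) (Inr y) = W H n x y"
proof (induction n arbitrary: y)
  case 0
  then show ?case unfolding W_def gunion_def by auto
next
  case (Suc n)
  have "W (gunion G H) (Suc n) (Inr x) (Inr y)
      = (\<Sum>z \<in> Inl ` verts G \<union> Inr ` verts H. W (gunion G H) n (Inr x) z * amat (gunion G H) z (Inr y))"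
    unfolding W_def by (simp add: mmul_def gunion_def)
  also have "\<dots> = (\<Sum>z \<in> verts H. W H n x z * amat H z y)"
    by (simp add: sum_split_sum wf_fin[OF G] wf_fin[OF H] Suc.IH amat_U_rr amat_U_lr)
  also have "\<dots> = W H (Suc n) x y" unfolding W_def by (simp add: mmul_def)
  finally show ?case .
qed

lemma one_edge:
  fixes F :: "'v graph" and G H :: "'a graph"
  assumes F: "simple_graph F" and e0: "e0 \<in> edges F" and G: "wf_graph G" and H: "wf_graph H"
    and hyp: "\<And>n. odd n \<Longrightarrow> n \<ge> k0 \<Longrightarrow> Phi F (l(e0 := n)) G = Phi F (l(e0 := n)) H"
  shows "Phi F (l(e0 := 1)) G = Phi F (l(e0 := 1)) H"
proof -
  define U where "U = gunion G H"
  define VU where "VU = verts U"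
  have U: "wf_graph U" unfolding U_def by (rule wf_gunion[OF G H])
  have finU: "finite VU" unfolding VU_def using wf_fin[OF U] .
  have VU: "VU = Inl ` verts G \<union> Inr ` verts H" unfolding VU_def U_def gunion_def by simp
  have finG: "finite (verts G)" using wf_fin[OF G] .
  have finH: "finite (verts H)" using wf_fin[OF H] .
  define A where "A = (\<lambda>p q. real (amat U p q))"
  have sA: "supp VU A" using supp_amat[OF U] unfolding supp_def A_def VU_def by auto
  have symA: "A p q = A q p" for p q unfolding A_def using amat_sym by metis
  define NU where "NU p q = (case p of Inl x \<Rightarrow> (case q of Inl y \<Rightarrow> real (NN F l e0 G x y) | Inr _ \<Rightarrow> 0)
     | Inr x \<Rightarrow> (case q of Inl _ \<Rightarrow> 0 | Inr y \<Rightarrow> - real (NN F l e0 H x y)))" for p q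
  have key: "(\<Sum>p\<in>VU. \<Sum>q\<in>VU. mpow VU A n p q * NU p q) = real (Phi F (l(e0 := n)) G) - real (Phi F (l(e0 := n)) H)" for n
  proof -
    have "(\<Sum>p\<in>VU. \<Sum>q\<in>VU. mpow VU A n p q * NU p q) = (\<Sum>p\<in>VU. \<Sum>q\<in>VU. real (W U n p q) * NU p q)"
      by (simp only: A_def W_def VU_def of_nat_mpow)
    also have "\<dots> = (\<Sum>x\<in>verts G. \<Sum>y\<in>verts G. real (W G n x y) * real (NN F l e0 G x y))
        - (\<Sum>x\<in>verts H. \<Sum>y\<in>verts H. real (W H n x y) * real (NN F l e0 H x y))"
      unfolding VU by (simp add: sum_split_sum finG finH NU_def U_def W_U_l[OF G H] W_U_r[OF G H] sum_negf)
    also have "\<dots> = real (Phi F (l(e0 := n)) G) - real (Phi F (l(e0 := n)) H)"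
      unfolding Phi_decomp[OF F e0 G] Phi_decomp[OF F e0 H] by simp
    finally show ?thesis .
  qed
  have "(\<Sum>p\<in>VU. \<Sum>q\<in>VU. A p q * NU p q) = 0"
  proof (rule interp[OF finU sA symA])
    fix j assume "j \<ge> k0"
    then have "odd (2*j+1)" "2*j+1 \<ge> k0" by auto
    then show "(\<Sum>p\<in>VU. \<Sum>q\<in>VU. mpow VU A (2*j+1) p q * NU p q) = 0"
      unfolding key using hyp by simp
  qed
  then have "(\<Sum>p\<in>VU. \<Sum>q\<in>VU. mpow VU A 1 p q * NU p q) = 0" using mpow_1[OF finU sA] by simp
  then show ?thesis unfolding key by simp
qed

lemma multi_interp:
  fixes F :: "'v graph" and G H :: "'a graph"
  assumes F: "simple_graph F" and G: "wf_graph G" and H: "wf_graph H"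
    and hyp: "\<And>l. (\<forall>e\<in>edges F. odd (l e) \<and> l e \<ge> k0) \<Longrightarrow> Phi F l G = Phi F l H"
  shows "Phi F (\<lambda>_. 1) G = Phi F (\<lambda>_. 1) H"
proof -
  have finEF: "finite (edges F)" using wf_fin_edges[OF simple_wf[OF F]] .
  have main: "finite D \<Longrightarrow> D \<subseteq> edges F \<Longrightarrow> (\<forall>l. (\<forall>e\<in>edges F - D. odd (l e) \<and> l e \<ge> k0) \<and> (\<forall>e\<in>D. l e = 1) \<longrightarrow> Phi F l G = Phi F l H)" for D
  proof (induction D rule: finite_induct)
    case empty then show ?case using hyp by auto
  next
    case (insert e0 D)
    show ?case
    proof (intro allI impI)
      fix l assume l: "(\<forall>e\<in>edges F - insert e0 D. odd (l e) \<and> l e \<ge> k0) \<and> (\<forall>e\<in>insert e0 D. l e = 1)"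
      have e0: "e0 \<in> edges F" using insert.prems by auto
      have "Phi F (l(e0 := 1)) G = Phi F (l(e0 := 1)) H"
      proof (rule one_edge[OF F e0 G H])
        fix n assume n: "odd n" "n \<ge> k0"
        have "(\<forall>e\<in>edges F - D. odd ((l(e0 := n)) e) \<and> (l(e0 := n)) e \<ge> k0) \<and> (\<forall>e\<in>D. (l(e0 := n)) e = 1)"
          using l n insert.hyps(2) by auto
        then show "Phi F (l(e0 := n)) G = Phi F (l(e0 := n)) H" using insert.IH insert.prems by auto
      qed
      moreover have "l(e0 := 1) = l" using l by auto
      ultimately show "Phi F l G = Phi F l H" by simp
    qed
  qed
  show ?thesis using main[OF finEF subset_refl, rule_format, of "\<lambda>_. 1"] by simp
qed

lemma path_edge_meets:
  assumes "ws \<noteq> []" "p \<in> path_edges (u # ws @ [v])"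
  shows "p \<inter> set ws \<noteq> {}"
proof -
  define q where "q = u # ws @ [v]"
  obtain i where i: "Suc i < length q" and p: "p = {q!i, q!Suc i}"
    using assms(2) unfolding path_edges_def q_def by auto
  have "q!i \<in> set ws \<or> q!Suc i \<in> set ws"
  proof (cases i)
    case 0
    then show ?thesis using assms(1) unfolding q_def by (cases ws) auto
  next
    case (Suc j)
    then have "j < length ws" using i unfolding q_def by simp
    then show ?thesis unfolding q_def Suc by (simp add: nth_append)
  qed
  then show ?thesis unfolding p by auto
qed

definition fresh :: "nat graph \<Rightarrow> nat" where
  "fresh F = Suc (Max (insert 0 (verts F)))"

lemma fresh_gt: "finite (verts F) \<Longrightarrow> x \<in> verts F \<Longrightarrow> x < fresh F"
  unfolding fresh_def by (simp add: le_imp_less_Suc)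

definition sub1 :: "nat graph \<Rightarrow> nat set \<Rightarrow> nat \<Rightarrow> nat graph" where
  "sub1 F e n = (if n \<le> 1 then F else
     subdivide_edge F (fst (ends e)) (snd (ends e)) [fresh F..<fresh F + (n - 1)])"

fun sub_all :: "nat graph \<Rightarrow> nat set list \<Rightarrow> (nat set \<Rightarrow> nat) \<Rightarrow> nat graph" where
  "sub_all F [] l = F"
| "sub_all F (e # es) l = sub_all (sub1 F e (l e)) es l"

lemma fresh_disj: "finite (verts F) \<Longrightarrow> set [fresh F..<fresh F + k] \<inter> verts F = {}"
  using fresh_gt by fastforce

lemma sub1_in:
  assumes cl: "closed_under_subdivisions \<F>" and F\<F>: "F \<in> \<F>" and F: "simple_graph F" and e: "e \<in> edges F"
  shows "sub1 F e n \<in> \<F>"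
proof (cases "n \<le> 1")
  case True
  then show ?thesis using F\<F> unfolding sub1_def by simp
next
  case False
  have "{fst (ends e), snd (ends e)} \<in> edges F" using simple_edge_ends(1)[OF F e] e by simp
  moreover have "fst (ends e) \<noteq> snd (ends e)" using simple_edge_ends(2)[OF F e] .
  moreover have "[fresh F..<fresh F + (n - 1)] \<noteq> []" using False by simp
  moreover have "set [fresh F..<fresh F + (n - 1)] \<inter> verts F = {}"
    using fresh_disj[OF wf_fin[OF simple_wf[OF F]]] .
  ultimately show ?thesis using cl F\<F> False unfolding closed_under_subdivisions_def sub1_def
    by (simp del: upt_Suc)
qed

lemma sub1_edges:
  assumes F: "simple_graph F" and e: "e \<in> edges F" and e': "e' \<in> edges F" "e' \<noteq> e"
  shows "e' \<in> edges (sub1 F e n)"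
proof -
  have "{fst (ends e), snd (ends e)} = e" using simple_edge_ends(1)[OF F e] by simp
  then show ?thesis using e' unfolding sub1_def subdivide_edge_def by auto
qed

lemma sub1_Phi:
  fixes G :: "'b graph"
  assumes G: "wf_graph G" and F: "simple_graph F" and e: "e \<in> edges F" and n: "n \<ge> 1"
    and le: "l e = 1" and lout: "\<And>p. p \<notin> edges F \<Longrightarrow> l p = 1"
  shows "Phi (sub1 F e n) l G = Phi F (l(e := n)) G"
proof (cases "n \<le> 1")
  case True
  then have "n = 1" using n by simp
  then have "l(e := n) = l" using le by auto
  then show ?thesis using True unfolding sub1_def by simp
next
  case False
  define ws where "ws = [fresh F..<fresh F + (n - 1)]"
  have ws3: "set ws \<inter> verts F = {}"
    unfolding ws_def by (rule fresh_disj[OF wf_fin[OF simple_wf[OF F]]])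
  have ws: "ws \<noteq> []" "distinct ws" "set ws \<inter> verts F = {}"
    using False ws3 unfolding ws_def by auto
  have l1: "\<forall>p \<in> path_edges (fst (ends e) # ws @ [snd (ends e)]). l p = 1"
  proof
    fix p assume "p \<in> path_edges (fst (ends e) # ws @ [snd (ends e)])"
    then have "p \<inter> set ws \<noteq> {}" by (rule path_edge_meets[OF ws(1)])
    then have "\<not> p \<subseteq> verts F" using ws(3) by auto
    then have "p \<notin> edges F" using wf_edge_sub[OF simple_wf[OF F]] by auto
    then show "l p = 1" by (rule lout)
  qed
  have len: "Suc (length ws) = n" unfolding ws_def using False by simp
  have "Phi (sub1 F e n) l G = Phi (subdivide_edge F (fst (ends e)) (snd (ends e)) ws) l G"
    unfolding sub1_def ws_def using False by simp
  also have "\<dots> = Phi F (l(e := Suc (length ws))) G"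
    by (rule Phi_subdivide[OF G F e refl refl ws l1])
  finally show ?thesis unfolding len .
qed

lemma sub_all_in:
  assumes cl: "closed_under_subdivisions \<F>" and simp: "\<forall>F\<in>\<F>. simple_graph F"
  shows "F \<in> \<F> \<Longrightarrow> distinct es \<Longrightarrow> set es \<subseteq> edges F \<Longrightarrow> sub_all F es l \<in> \<F>"
proof (induction es arbitrary: F)
  case Nil
  then show ?case by simp
next
  case (Cons e es)
  have F: "simple_graph F" using simp Cons.prems(1) by auto
  have e: "e \<in> edges F" using Cons.prems(3) by simp
  have F1: "sub1 F e (l e) \<in> \<F>" by (rule sub1_in[OF cl Cons.prems(1) F e])
  have "set es \<subseteq> edges (sub1 F e (l e))"
    using sub1_edges[OF F e] Cons.prems(2,3) by auto
  then show ?case using Cons.IH[OF F1] Cons.prems(2) by simp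
qed

lemma sub_all_Phi:
  fixes G :: "'b graph"
  assumes cl: "closed_under_subdivisions \<F>" and simp: "\<forall>F\<in>\<F>. simple_graph F" and G: "wf_graph G"
  shows "F \<in> \<F> \<Longrightarrow> distinct es \<Longrightarrow> set es \<subseteq> edges F \<Longrightarrow> (\<forall>e\<in>set es. l e \<ge> 1) \<Longrightarrow>
    Phi (sub_all F es l) (\<lambda>_. 1) G = Phi F (\<lambda>e. if e \<in> set es then l e else 1) G"
proof (induction es arbitrary: F)
  case Nil
  then show ?case by simp
next
  case (Cons e es)
  have F: "simple_graph F" using simp Cons.prems(1) by auto
  have e: "e \<in> edges F" using Cons.prems(3) by simp
  have F1: "sub1 F e (l e) \<in> \<F>" by (rule sub1_in[OF cl Cons.prems(1) F e])
  have F1s: "simple_graph (sub1 F e (l e))" using simp F1 by auto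
  have sub: "set es \<subseteq> edges (sub1 F e (l e))"
    using sub1_edges[OF F e] Cons.prems(2,3) by auto
  have "Phi (sub_all F (e # es) l) (\<lambda>_. 1) G = Phi (sub_all (sub1 F e (l e)) es l) (\<lambda>_. 1) G" by simp
  also have "\<dots> = Phi (sub1 F e (l e)) (\<lambda>e'. if e' \<in> set es then l e' else 1) G"
    using Cons.IH[OF F1] Cons.prems sub by simp
  also have "\<dots> = Phi F ((\<lambda>e'. if e' \<in> set es then l e' else 1)(e := l e)) G"
  proof (rule sub1_Phi[OF G F e])
    show "l e \<ge> 1" using Cons.prems(4) by simp
    show "(if e \<in> set es then l e else 1) = 1" using Cons.prems(2) by simp
    fix p assume "p \<notin> edges F"
    then show "(if p \<in> set es then l p else 1) = 1" using Cons.prems(3) by auto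
  qed
  also have "(\<lambda>e'. if e' \<in> set es then l e' else 1)(e := l e) = (\<lambda>e'. if e' \<in> set (e # es) then l e' else 1)"
    by auto
  finally show ?case .
qed

lemma W_supp: assumes G: "wf_graph G" and pos: "W G n x y > 0" shows "x \<in> verts G \<and> y \<in> verts G"
proof (rule ccontr)
  assume "\<not> (x \<in> verts G \<and> y \<in> verts G)"
  moreover have "supp (verts G) (W G n)" unfolding W_def by (rule supp_mpow[OF supp_amat[OF G]])
  ultimately have "W G n x y = 0" unfolding supp_def by blast
  then show False using pos by simp
qed

lemma W_pos_trans:
  assumes G: "wf_graph G" and a: "W G a x z > 0" and b: "W G b z y > 0"
  shows "W G (a + b) x y > 0"
proof -
  have z: "z \<in> verts G" using W_supp[OF G a] by simp
  have "W G a x z * W G b z y \<le> (\<Sum>z\<in>verts G. W G a x z * W G b z y)"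
    by (rule member_le_sum) (use z wf_fin[OF G] in auto)
  moreover have "W G a x z * W G b z y > 0" using a b by simp
  ultimately show ?thesis unfolding W_add[OF G] by linarith
qed

lemma W_sym: assumes G: "wf_graph G" shows "W G n x y = W G n y x"
proof (induction n arbitrary: x y)
  case 0
  then show ?case unfolding W_def by auto
next
  case (Suc n)
  have "W G (Suc n) x y = (\<Sum>z\<in>verts G. W G n x z * amat G z y)"
    unfolding W_def by (simp add: mmul_def)
  also have "\<dots> = (\<Sum>z\<in>verts G. amat G y z * W G n z x)"
    using Suc.IH by (simp add: mult.commute amat_sym[of G _ y])
  also have "\<dots> = W G (Suc n) y x" by (rule W_Suc_left[OF G, symmetric])
  finally show ?case .
qed

lemma W0_refl: "x \<in> verts G \<Longrightarrow> W G 0 x x = 1"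
  unfolding W_def by simp

lemma W1_edge: assumes "wf_graph G" "{x, y} \<in> edges G" shows "W G 1 x y > 0"
proof -
  have "W G 1 x y = amat G x y" using W1[OF assms(1)] by simp
  then show ?thesis using assms(2) unfolding amat_def by simp
qed

lemma odd_closed_walk:
  fixes K :: "'k graph"
  assumes K: "wf_graph K" and nb: "\<not> bipartite K"
  shows "\<exists>c\<in>verts K. \<exists>k. odd k \<and> W K k c c > 0"
proof (rule ccontr)
  assume nc: "\<not> ?thesis"
  define R where "R x y \<longleftrightarrow> (\<exists>n. W K n x y > 0)" for x y
  define rep where "rep x = (SOME r. R x r)" for x
  define col where "col x \<longleftrightarrow> (\<exists>n. even n \<and> W K n x (rep x) > 0)" for x
  have Rrefl: "R x x" if "x \<in> verts K" for x
    unfolding R_def using W0_refl[OF that] by (intro exI[of _ 0]) simp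
  have Rrep: "R x (rep x)" if "x \<in> verts K" for x
    unfolding rep_def using Rrefl[OF that] by (rule someI)
  have Rsym: "R x y \<Longrightarrow> R y x" for x y unfolding R_def using W_sym[OF K] by metis
  have Rtrans: "R x y \<Longrightarrow> R y z \<Longrightarrow> R x z" for x y z
    unfolding R_def using W_pos_trans[OF K] by blast
  have rep_eq: "rep x = rep y" if "R x y" for x y
  proof -
    have "(\<lambda>r. R x r) = (\<lambda>r. R y r)" using that Rsym Rtrans by blast
    then show ?thesis unfolding rep_def by simp
  qed
  have "bipartite K"
    unfolding bipartite_def
  proof (intro exI[of _ col] ballI)
    fix e assume e: "e \<in> edges K"
    then have "card e = 1 \<or> card e = 2" using K unfolding wf_graph_def by auto
    then obtain a b where eab: "e = {a, b}" by (auto simp: card_1_singleton_iff card_2_iff)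
    have ab: "a \<in> verts K" "b \<in> verts K" using wf_edge_sub[OF K e] eab by auto
    have Wab: "W K 1 a b > 0" using W1_edge[OF K] e eab by simp
    have "a \<noteq> b"
    proof
      assume "a = b"
      then have w1: "W K 1 a a > 0" using Wab by simp
      have "\<not> (odd (1::nat) \<and> W K 1 a a > 0)" using nc ab(1) by blast
      then show False using w1 by simp
    qed
    have "col a \<noteq> col b"
    proof
      assume cc: "col a = col b"
      have Rab: "R a b" unfolding R_def using Wab by blast
      define r where "r = rep a"
      have rb: "rep b = r" unfolding r_def using rep_eq[OF Rab] by simp
      have r: "r \<in> verts K" using Rrep[OF ab(1)] unfolding R_def r_def using W_supp[OF K] by blast
      have par: "\<exists>na nb. W K na a r > 0 \<and> W K nb b r > 0 \<and> (even na \<longleftrightarrow> even nb)"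
      proof (cases "col a")
        case True
        then have "col b" using cc by simp
        then obtain nb where nb: "even nb" "W K nb b r > 0" unfolding col_def rb by blast
        obtain na where na: "even na" "W K na a r > 0" using True unfolding col_def r_def by blast
        show ?thesis using na nb by blast
      next
        case False
        then have "\<not> col b" using cc by simp
        obtain na where na: "W K na a r > 0" using Rrep[OF ab(1)] unfolding R_def r_def by blast
        obtain nb where nb: "W K nb b r > 0" using Rrep[OF ab(2)] rb unfolding R_def by auto
        have "odd na" using False na unfolding col_def r_def by blast
        moreover have "odd nb" using \<open>\<not> col b\<close> nb rb unfolding col_def by auto
        ultimately show ?thesis using na nb by blast
      qed
      then obtain na nb where w: "W K na a r > 0" "W K nb b r > 0" "even na \<longleftrightarrow> even nb" by blast
      have "W K nb r b > 0" using w(2) W_sym[OF K] by simp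
      moreover have "W K 1 b a > 0" using Wab W_sym[OF K] by simp
      ultimately have "W K (nb + 1) r a > 0" by (rule W_pos_trans[OF K])
      then have "W K (nb + 1 + na) r r > 0" using w(1) by (rule W_pos_trans[OF K])
      moreover have "odd (nb + 1 + na)" using w(3) by simp
      ultimately show False using nc r by blast
    qed
    then show "\<exists>x y. e = {x, y} \<and> col x \<noteq> col y" using eab by blast
  qed
  then show False using nb by simp
qed

lemma odd_walks_all:
  fixes K :: "'k graph"
  assumes K: "wf_graph K" and c: "c \<in> verts K" and k: "odd k" and w: "W K k c c > 0"
  shows "odd n \<Longrightarrow> n \<ge> k \<Longrightarrow> W K n c c > 0"
proof -
  obtain k' where k': "k = Suc k'" using k by (cases k) auto
  have "(\<Sum>z\<in>verts K. amat K c z * W K k' z c) > 0" using w unfolding k' W_Suc_left[OF K] .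
  have "\<exists>z\<in>verts K. amat K c z * W K k' z c > 0"
  proof (rule ccontr)
    assume "\<not> (\<exists>z\<in>verts K. amat K c z * W K k' z c > 0)"
    then have "\<forall>z\<in>verts K. amat K c z * W K k' z c = 0" by auto
    then have "(\<Sum>z\<in>verts K. amat K c z * W K k' z c) = 0" by (rule sum.neutral)
    then show False using \<open>(\<Sum>z\<in>verts K. amat K c z * W K k' z c) > 0\<close> by simp
  qed
  then obtain z where z: "z \<in> verts K" "amat K c z * W K k' z c > 0" by blast
  then have az: "amat K c z > 0" by simp
  have "W K 1 c z = amat K c z" "W K 1 z c = amat K z c" using W1[OF K] by simp_all
  then have "W K 1 c z > 0" "W K 1 z c > 0" using az amat_sym[of K c z] by simp_all
  then have "W K (1 + 1) c c > 0" by (intro W_pos_trans[OF K]) 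
  then have W2: "W K 2 c c > 0" by (simp only: one_add_one)
  have step: "W K (k + 2 * t) c c > 0" for t
  proof (induction t)
    case 0 then show ?case using w by simp
  next
    case (Suc t)
    have "W K (k + 2 * t + 2) c c > 0" by (rule W_pos_trans[OF K Suc.IH W2])
    then show ?case by (simp add: add.assoc)
  qed
  assume n: "odd n" "n \<ge> k"
  then have "n = k + 2 * ((n - k) div 2)" using k by presburger
  then show "W K n c c > 0" using step by metis
qed

lemma Phi_pos:
  fixes F :: "'v graph" and K :: "'k graph"
  assumes F: "simple_graph F" and K: "wf_graph K" and c: "c \<in> verts K"
    and pos: "\<And>e. e \<in> edges F \<Longrightarrow> W K (l e) c c > 0"
  shows "Phi F l K > 0"
proof -
  define f0 where "f0 = (\<lambda>x. if x \<in> verts F then c else undefined)"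
  have f0: "f0 \<in> verts F \<rightarrow>\<^sub>E verts K" unfolding f0_def using c by auto
  have fin: "finite (verts F \<rightarrow>\<^sub>E verts K)"
    using wf_fin[OF simple_wf[OF F]] wf_fin[OF K] by (intro finite_PiE) auto
  have "(\<Prod>e\<in>edges F. W K (l e) (f0 (fst (ends e))) (f0 (snd (ends e)))) > 0"
  proof (rule prod_pos)
    fix e assume e: "e \<in> edges F"
    have "f0 (fst (ends e)) = c" "f0 (snd (ends e)) = c"
      unfolding f0_def using simple_edge_ends(3,4)[OF F e] by auto
    then show "W K (l e) (f0 (fst (ends e))) (f0 (snd (ends e))) > 0" using pos[OF e] by simp
  qed
  moreover have "(\<Prod>e\<in>edges F. W K (l e) (f0 (fst (ends e))) (f0 (snd (ends e)))) \<le> Phi F l K"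
    unfolding Phi_def by (rule member_le_sum[OF f0]) (use fin in auto)
  ultimately show ?thesis by linarith
qed

lemma prod_edge:
  "{p, q} \<in> edges (graph_prod G K) \<longleftrightarrow> {fst p, fst q} \<in> edges G \<and> {snd p, snd q} \<in> edges K"
proof
  assume "{p, q} \<in> edges (graph_prod G K)"
  then obtain g g' k k' where eq: "{p, q} = {(g, k), (g', k')}" and e: "{g, g'} \<in> edges G" "{k, k'} \<in> edges K"
    unfolding graph_prod_def by auto
  from eq have "(p = (g, k) \<and> q = (g', k')) \<or> (p = (g', k') \<and> q = (g, k))" by (simp add: doubleton_eq_iff)
  then show "{fst p, fst q} \<in> edges G \<and> {snd p, snd q} \<in> edges K"
    using e by (auto simp: insert_commute)
next
  assume "{fst p, fst q} \<in> edges G \<and> {snd p, snd q} \<in> edges K"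
  then show "{p, q} \<in> edges (graph_prod G K)"
    unfolding graph_prod_def by (cases p; cases q) auto
qed

lemma hom_prod:
  fixes F :: "'v graph" and G :: "'a graph" and K :: "'k graph"
  assumes F: "simple_graph F"
  shows "hom F (graph_prod G K) = hom F G * hom F K"
proof -
  define \<pi> where "\<pi> f = (restrict (fst \<circ> f) (verts F), restrict (snd \<circ> f) (verts F))" for f :: "'v \<Rightarrow> 'a \<times> 'k"
  define \<sigma> where "\<sigma> gh = restrict (\<lambda>x. (fst gh x, snd gh x)) (verts F)" for gh :: "('v \<Rightarrow> 'a) \<times> ('v \<Rightarrow> 'k)"
  have edge_img: "f ` e = {f (fst (ends e)), f (snd (ends e))}" if "e \<in> edges F" for e and f :: "'v \<Rightarrow> 'b"
  proof -
    define a where "a = fst (ends e)"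
    define b where "b = snd (ends e)"
    have "e = {a, b}" using simple_edge_ends(1)[OF F that] unfolding a_def b_def .
    then show ?thesis unfolding a_def[symmetric] b_def[symmetric] by simp
  qed
  have ends_in: "fst (ends e) \<in> verts F" "snd (ends e) \<in> verts F" if "e \<in> edges F" for e
    using simple_edge_ends(3,4)[OF F that] by auto
  have "bij_betw \<pi> (homs F (graph_prod G K)) (homs F G \<times> homs F K)"
  proof (rule bij_betw_byWitness[where f' = \<sigma>])
    show "\<forall>f\<in>homs F (graph_prod G K). \<sigma> (\<pi> f) = f"
      unfolding homs_def \<pi>_def \<sigma>_def by (auto simp: fun_eq_iff PiE_def extensional_def)
    show "\<forall>gh\<in>homs F G \<times> homs F K. \<pi> (\<sigma> gh) = gh"
      unfolding homs_def \<pi>_def \<sigma>_def by (auto simp: fun_eq_iff PiE_def extensional_def)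
    show "\<pi> ` homs F (graph_prod G K) \<subseteq> homs F G \<times> homs F K"
    proof
      fix gh assume "gh \<in> \<pi> ` homs F (graph_prod G K)"
      then obtain f where f: "f \<in> homs F (graph_prod G K)" and gh: "gh = \<pi> f" by blast
      have fP: "f \<in> verts F \<rightarrow>\<^sub>E verts (graph_prod G K)" and fe: "\<forall>e\<in>edges F. f ` e \<in> edges (graph_prod G K)"
        using f unfolding homs_def by auto
      have "restrict (fst \<circ> f) (verts F) \<in> homs F G"
        unfolding homs_def
      proof (intro CollectI conjI ballI)
        show "restrict (fst \<circ> f) (verts F) \<in> verts F \<rightarrow>\<^sub>E verts G" using fP unfolding graph_prod_def by (auto simp: PiE_iff mem_Times_iff)
        fix e assume e: "e \<in> edges F"
        have "{f (fst (ends e)), f (snd (ends e))} \<in> edges (graph_prod G K)" using fe e by (simp only: edge_img[OF e, of f, symmetric])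
        then have mem: "{fst (f (fst (ends e))), fst (f (snd (ends e)))} \<in> edges G" unfolding prod_edge by simp
        have img: "restrict (fst \<circ> f) (verts F) ` e = {fst (f (fst (ends e))), fst (f (snd (ends e)))}"
          unfolding edge_img[OF e, of "restrict (fst \<circ> f) (verts F)"] using ends_in[OF e] by simp
        show "restrict (fst \<circ> f) (verts F) ` e \<in> edges G"
          unfolding img by (rule mem)
      qed
      moreover have "restrict (snd \<circ> f) (verts F) \<in> homs F K"
        unfolding homs_def
      proof (intro CollectI conjI ballI)
        show "restrict (snd \<circ> f) (verts F) \<in> verts F \<rightarrow>\<^sub>E verts K" using fP unfolding graph_prod_def by (auto simp: PiE_iff mem_Times_iff)
        fix e assume e: "e \<in> edges F"
        have "{f (fst (ends e)), f (snd (ends e))} \<in> edges (graph_prod G K)" using fe e by (simp only: edge_img[OF e, of f, symmetric])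
        then have mem: "{snd (f (fst (ends e))), snd (f (snd (ends e)))} \<in> edges K" unfolding prod_edge by simp
        have img: "restrict (snd \<circ> f) (verts F) ` e = {snd (f (fst (ends e))), snd (f (snd (ends e)))}"
          unfolding edge_img[OF e, of "restrict (snd \<circ> f) (verts F)"] using ends_in[OF e] by simp
        show "restrict (snd \<circ> f) (verts F) ` e \<in> edges K"
          unfolding img by (rule mem)
      qed
      ultimately show "gh \<in> homs F G \<times> homs F K" unfolding gh \<pi>_def by simp
    qed
    show "\<sigma> ` (homs F G \<times> homs F K) \<subseteq> homs F (graph_prod G K)"
    proof
      fix f assume "f \<in> \<sigma> ` (homs F G \<times> homs F K)"
      then obtain g h where g: "g \<in> homs F G" and h: "h \<in> homs F K" and f: "f = \<sigma> (g, h)" by blast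
      have gP: "g \<in> verts F \<rightarrow>\<^sub>E verts G" and ge: "\<forall>e\<in>edges F. g ` e \<in> edges G"
        using g unfolding homs_def by auto
      have hP: "h \<in> verts F \<rightarrow>\<^sub>E verts K" and he: "\<forall>e\<in>edges F. h ` e \<in> edges K"
        using h unfolding homs_def by auto
      show "f \<in> homs F (graph_prod G K)"
        unfolding homs_def
      proof (intro CollectI conjI ballI)
        show "f \<in> verts F \<rightarrow>\<^sub>E verts (graph_prod G K)"
          using gP hP unfolding f \<sigma>_def graph_prod_def by auto
        fix e assume e: "e \<in> edges F"
        have "{g (fst (ends e)), g (snd (ends e))} \<in> edges G" using ge e by (simp only: edge_img[OF e, of g, symmetric])
        moreover have "{h (fst (ends e)), h (snd (ends e))} \<in> edges K" using he e by (simp only: edge_img[OF e, of h, symmetric])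
        ultimately have "{f (fst (ends e)), f (snd (ends e))} \<in> edges (graph_prod G K)"
          unfolding prod_edge f \<sigma>_def using ends_in[OF e] by simp
        then show "f ` e \<in> edges (graph_prod G K)" by (simp only: edge_img[OF e, of f])
      qed
    qed
  qed
  then have "card (homs F (graph_prod G K)) = card (homs F G \<times> homs F K)" by (rule bij_betw_same_card)
  then show ?thesis unfolding hom_def by (simp add: card_cartesian_product)
qed

lemma core:
  fixes \<F> :: "nat graph set" and K :: "'k graph" and G H :: "'a graph"
  assumes simp: "\<forall>F\<in>\<F>. simple_graph F" and cl: "closed_under_subdivisions \<F>"
    and K: "wf_graph K" and nb: "\<not> bipartite K" and G: "wf_graph G" and H: "wf_graph H"
    and eq: "\<And>F. F \<in> \<F> \<Longrightarrow> hom F K > 0 \<Longrightarrow> hom F G = hom F H"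
    and L: "L \<in> \<F>"
  shows "hom L G = hom L H"
proof -
  have Ls: "simple_graph L" using simp L by auto
  obtain c k0 where c: "c \<in> verts K" and k0: "odd k0" "W K k0 c c > 0"
    using odd_closed_walk[OF K nb] by blast
  have "Phi L (\<lambda>_. 1) G = Phi L (\<lambda>_. 1) H"
  proof (rule multi_interp[OF Ls G H])
    fix l assume l: "\<forall>e\<in>edges L. odd (l e) \<and> l e \<ge> k0"
    obtain es where es: "set es = edges L" "distinct es"
      using finite_distinct_list[OF wf_fin_edges[OF simple_wf[OF Ls]]] by blast
    have l1: "\<forall>e\<in>set es. l e \<ge> 1"
    proof
      fix e assume "e \<in> set es"
      then have "odd (l e)" using l es(1) by auto
      then show "l e \<ge> 1" by (cases "l e") auto
    qed
    define F' where "F' = sub_all L es l"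
    have F': "F' \<in> \<F>" unfolding F'_def by (rule sub_all_in[OF cl simp L es(2)]) (use es in simp)
    have F's: "simple_graph F'" using simp F' by auto
    have PhiF': "hom F' X = Phi L l X" if X: "wf_graph X" for X :: "'b graph"
    proof -
      have "hom F' X = Phi F' (\<lambda>_. 1) X" by (rule hom_Phi[OF F's X])
      also have "\<dots> = Phi L (\<lambda>e. if e \<in> set es then l e else 1) X"
        unfolding F'_def by (rule sub_all_Phi[OF cl simp X L es(2)]) (use es l1 in simp_all)
      also have "\<dots> = Phi L l X" by (rule Phi_cong) (use es in simp)
      finally show ?thesis .
    qed
    have "Phi L l K > 0"
    proof (rule Phi_pos[OF Ls K c])
      fix e assume "e \<in> edges L"
      then show "W K (l e) c c > 0" using odd_walks_all[OF K c k0] l by auto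
    qed
    then have "hom F' K > 0" using PhiF'[OF K] by simp
    then have "hom F' G = hom F' H" using eq[OF F'] by simp
    then show "Phi L l G = Phi L l H" using PhiF'[OF G] PhiF'[OF H] by simp
  qed
  then show ?thesis using hom_Phi[OF Ls G] hom_Phi[OF Ls H] by simp
qed

theorem theorem43:
  fixes \<F> :: "nat graph set" and K :: "'k graph"
  assumes "\<forall>F\<in>\<F>. simple_graph F"
    and "closed_under_subdivisions \<F>"
    and "wf_graph K" and "\<not> bipartite K"
  shows "\<F> \<subseteq> cl (restrict_class \<F> K) \<and>
         admits_cancellation (hom_equiv \<F> :: 'a graph \<Rightarrow> 'a graph \<Rightarrow> bool)
           (hom_equiv \<F>) K"
proof
  show "\<F> \<subseteq> cl (restrict_class \<F> K)"
  proof
    fix L assume L: "L \<in> \<F>"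
    show "L \<in> cl (restrict_class \<F> K)"
      unfolding cl_def
    proof (intro CollectI conjI allI impI)
      show "simple_graph L" using assms(1) L by auto
      fix G H :: "nat graph"
      assume G: "simple_graph G" and H: "simple_graph H" and he: "hom_equiv (restrict_class \<F> K) G H"
      show "hom L G = hom L H"
      proof (rule core[OF assms(1,2,3,4) simple_wf[OF G] simple_wf[OF H] _ L])
        fix F assume "F \<in> \<F>" "hom F K > 0"
        then have "F \<in> restrict_class \<F> K" unfolding restrict_class_def by simp
        then show "hom F G = hom F H" using he unfolding hom_equiv_def by blast
      qed
    qed
  qed
next
  show "admits_cancellation (hom_equiv \<F> :: 'a graph \<Rightarrow> 'a graph \<Rightarrow> bool) (hom_equiv \<F>) K"
    unfolding admits_cancellation_def
  proof (intro allI impI)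
    fix G H :: "'a graph"
    assume G: "wf_graph G" and H: "wf_graph H" and he: "hom_equiv \<F> (graph_prod G K) (graph_prod H K)"
    show "hom_equiv \<F> G H"
      unfolding hom_equiv_def
    proof
      fix L assume L: "L \<in> \<F>"
      show "hom L G = hom L H"
      proof (rule core[OF assms(1,2,3,4) G H _ L])
        fix F assume F: "F \<in> \<F>" and pos: "hom F K > 0"
        have Fs: "simple_graph F" using assms(1) F by auto
        have "hom F (graph_prod G K) = hom F (graph_prod H K)" using he F unfolding hom_equiv_def by blast
        then have "hom F G * hom F K = hom F H * hom F K" unfolding hom_prod[OF Fs] .
        then show "hom F G = hom F H" using pos by simp
      qed
    qed
  qed
qed

end
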